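(* Let $n\ge1$ and for $J,K\subseteq[n-1]$ set $c(J,K)=\#\{u\in\mathfrak{S}_n:\mathrm{Des}(u)\subseteq J,\ \mathrm{Des}(u^{-1})\supseteq K\}$. Then for all $J,R\subseteq[n-1]$, $$c\big(J,(\widetilde{R})^{c}\big)=c\big(R,(\widetilde{J})^{c}\big).$$ Moreover, with $\Phi\colon QSym^*\to QSym$ as below and $S$ the antipode, $S\Phi(M_J^* )=\Phi S^*(M_J^* )=(-1)^n\sum_{R\subseteq[n-1]}c(J,(\widetilde R)^c)\,M_R$.
   Context: $\mathrm{Des}(u)=\{p\in[n-1]:u_p>u_{p+1}\}$ for $u\in\mathfrak{S}_n$ in one-line notation. For $J\subseteq[n-1]$: $J^c=[n-1]\setminus J$ and $\widetilde{J}=\{i\in[n-1]:n-i\in J\}$. $QSym$ is the Hopf algebra of quasi-symmetric functions with monomial basis $M_J$ ($J\subseteq[n-1]$) and $QSym^*$ its graded dual with dual basis $M_J^*$; $S^*$ is the antipode of $QSym^*$. $\Phi=\mathcal{D}\circ\Theta\circ\mathcal{D}^*$, where $\mathcal{D}\colon\mathfrak{S}Sym\to QSym$, $\mathcal{F}_u\mapsto F_{\mathrm{Des}(u)}$ (with $F_J=\sum_{K\supseteq J}M_K$), $\mathcal{D}^*$ is its dual, and $\Theta\colon(\mathfrak{S}Sym)^*\to\mathfrak{S}Sym$ is $\mathcal{F}^*_u\mapsto\mathcal{F}_{u^{-1}}$, for the Malvenuto–Reutenauer Hopf algebra $\mathfrak{S}Sym$ with fundamental basis $\mathcal{F}_u$.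 *)

theory Defs
  imports "HOL-Combinatorics.Permutations"
begin

definition perms :: "nat \<Rightarrow> (nat \<Rightarrow> nat) set" where
  "perms n = {u. u permutes {1..n}}"

definition Des :: "nat \<Rightarrow> (nat \<Rightarrow> nat) \<Rightarrow> nat set" where
  "Des n u = {p \<in> {1..n-1}. u (Suc p) < u p}"

definition setc :: "nat \<Rightarrow> nat set \<Rightarrow> nat set" where
  "setc n J = {1..n-1} - J"

definition tildeS :: "nat \<Rightarrow> nat set \<Rightarrow> nat set" where
  "tildeS n J = {i \<in> {1..n-1}. n - i \<in> J}"

definition cnt :: "nat \<Rightarrow> nat set \<Rightarrow> nat set \<Rightarrow> nat" where
  "cnt n J K = card {u \<in> perms n. Des n u \<subseteq> J \<and> K \<subseteq> Des n (inv u)}"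

(* quasi-shuffle (stuffle) of compositions: M_a * M_b = sum over qsh a b (with multiplicity) *)
fun qsh :: "nat list \<Rightarrow> nat list \<Rightarrow> nat list list" where
  "qsh [] b = [b]"
| "qsh a [] = [a]"
| "qsh (x # a) (y # b) =
     map ((#) x) (qsh a (y # b)) @ map ((#) y) (qsh (x # a) b) @ map ((#) (x + y)) (qsh a b)"

(* elements of QSym as formal integer combinations (coefficient, composition) of the M_alpha *)
type_synonym qexpr = "(int \<times> nat list) list"

definition qmult :: "qexpr \<Rightarrow> qexpr \<Rightarrow> qexpr" where
  "qmult xs ys = concat (map (\<lambda>(a, \<alpha>). concat (map (\<lambda>(b, \<beta>). map (\<lambda>\<gamma>. (a * b, \<gamma>)) (qsh \<alpha> \<beta>)) ys)) xs)"

definition qcoeff :: "qexpr \<Rightarrow> nat list \<Rightarrow> int" where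
  "qcoeff xs \<gamma> = sum_list (map fst (filter (\<lambda>p. snd p = \<gamma>) xs))"

(* Antipode via its defining recursion  m (S \<otimes> id) \<Delta> (M_alpha) = 0 for alpha nonempty,
   with deconcatenation coproduct  \<Delta> M_alpha = sum_i M_(alpha_1..alpha_i) \<otimes> M_(alpha_(i+1)..).
   The first argument is fuel. *)
primrec antip :: "nat \<Rightarrow> nat list \<Rightarrow> qexpr" where
  "antip 0 \<alpha> = [(1, [])]"
| "antip (Suc k) \<alpha> =
     (if \<alpha> = [] then [(1, [])]
      else concat (map (\<lambda>i. map (\<lambda>(a, \<gamma>). (- a, \<gamma>)) (qmult (antip k (take i \<alpha>)) [(1, drop i \<alpha>)]))
                       [0..<length \<alpha>]))"

definition antipode :: "nat list \<Rightarrow> qexpr" where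
  "antipode \<alpha> = antip (length \<alpha>) \<alpha>"

(* J = {j1 < ... < jk} \<subseteq> [n-1]  \<mapsto>  composition (j1, j2-j1, ..., n-jk) *)
definition comp :: "nat \<Rightarrow> nat set \<Rightarrow> nat list" where
  "comp n J = (let ps = sorted_list_of_set J in map2 (\<lambda>a b. a - b) (ps @ [n]) (0 # ps))"

(* Degree-n elements of QSym are coefficient functions R \<mapsto> coefficient of M_R;
   degree-n elements of QSym^* are coefficient functions J \<mapsto> coefficient of M_J^*;
   degree-n elements of SSym and SSym^* are coefficient functions on perms n. *)

definition Sq :: "nat \<Rightarrow> (nat set \<Rightarrow> int) \<Rightarrow> (nat set \<Rightarrow> int)" where
  "Sq n f = (\<lambda>R. \<Sum>J\<in>Pow {1..n-1}. f J * qcoeff (antipode (comp n J)) (comp n R))"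

(* antipode S^* of QSym^*: the transpose of S *)
definition Sstar :: "nat \<Rightarrow> (nat set \<Rightarrow> int) \<Rightarrow> (nat set \<Rightarrow> int)" where
  "Sstar n g = (\<lambda>K. \<Sum>J\<in>Pow {1..n-1}. g J * qcoeff (antipode (comp n K)) (comp n J))"

(* coefficient of M_K in F_J = sum_{K \<supseteq> J} M_K *)
definition Fcoef :: "nat set \<Rightarrow> nat set \<Rightarrow> int" where
  "Fcoef J K = (if J \<subseteq> K then 1 else 0)"

(* D : SSym \<rightarrow> QSym, F_u \<mapsto> F_Des(u) *)
definition Dmap :: "nat \<Rightarrow> ((nat \<Rightarrow> nat) \<Rightarrow> int) \<Rightarrow> (nat set \<Rightarrow> int)" where
  "Dmap n x = (\<lambda>K. \<Sum>u\<in>perms n. x u * Fcoef (Des n u) K)"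

(* D^* : QSym^* \<rightarrow> SSym^*, dual of D:  <D^*(g), F_u> = <g, D(F_u)> *)
definition Dstar :: "nat \<Rightarrow> (nat set \<Rightarrow> int) \<Rightarrow> ((nat \<Rightarrow> nat) \<Rightarrow> int)" where
  "Dstar n g = (\<lambda>u. \<Sum>J\<in>Pow {1..n-1}. g J * Fcoef (Des n u) J)"

(* Theta : SSym^* \<rightarrow> SSym, F_u^* \<mapsto> F_(u^-1) *)
definition Theta :: "nat \<Rightarrow> ((nat \<Rightarrow> nat) \<Rightarrow> int) \<Rightarrow> ((nat \<Rightarrow> nat) \<Rightarrow> int)" where
  "Theta n z = (\<lambda>v. \<Sum>u\<in>perms n. if inv u = v then z u else 0)"

definition Phi :: "nat \<Rightarrow> (nat set \<Rightarrow> int) \<Rightarrow> (nat set \<Rightarrow> int)" where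
  "Phi n = Dmap n \<circ> Theta n \<circ> Dstar n"

definition Mstar :: "nat set \<Rightarrow> (nat set \<Rightarrow> int)" where
  "Mstar J = (\<lambda>K. if K = J then 1 else 0)"

end

theory Submission
  imports Defs
begin

fun coars :: "nat list \<Rightarrow> nat list list" where
  "coars [] = [[]]"
| "coars (x#q) = concat (map (\<lambda>t. map ((#) (sum_list (take t (x#q)))) (coars (drop t (x#q)))) [1..<Suc (length (x#q))])"

declare coars.simps(2)[simp del]

definition Yq :: "nat list \<Rightarrow> nat list \<Rightarrow> nat list list" where
  "Yq q s = concat (map (\<lambda>\<beta>. qsh \<beta> s) (coars q))"

lemma smm: "sum_list (map f (map g ys)) = sum_list (map (\<lambda>y. f (g y)) ys)"
  by (induction ys) auto

lemma count_concat: "count_list (concat xss) y = (\<Sum>xs\<leftarrow>xss. count_list xs y)"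
  by (induction xss) auto

lemma count_map_cons: "count_list (map ((#) a) xs) (g # \<gamma>) = (if a = g then count_list xs \<gamma> else 0)"
  by (induction xs) auto

lemma count_map_cons_nil: "count_list (map ((#) a) xs) [] = 0"
  by (induction xs) auto

lemma sum_list_map_upt_Suc: "(\<Sum>t\<leftarrow>[1..<Suc n]. f t) = (\<Sum>t\<in>{1..n}. (f t :: 'a::comm_monoid_add))"
proof -
  have "sum_list (map f [1..<Suc n]) = sum f (set [1..<Suc n])" by (simp only: sum_set_upt_conv_sum_list_nat)
  then show ?thesis by (simp only: set_upt atLeastLessThanSuc_atLeastAtMost)
qed

lemma coars_cons_count:
  assumes "q \<noteq> []"
  shows "count_list (coars q) (g # \<gamma>) = (\<Sum>t\<in>{1..length q}. if sum_list (take t q) = g then count_list (coars (drop t q)) \<gamma> else 0)"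
proof -
  obtain x q' where q: "q = x # q'" using assms by (cases q) auto
  have "count_list (coars q) (g # \<gamma>) = (\<Sum>t\<leftarrow>[1..<Suc (length q)]. count_list (map ((#) (sum_list (take t q))) (coars (drop t q))) (g # \<gamma>))"
    unfolding q coars.simps(2) count_concat smm by simp
  also have "\<dots> = (\<Sum>t\<leftarrow>[1..<Suc (length q)]. if sum_list (take t q) = g then count_list (coars (drop t q)) \<gamma> else 0)"
    by (simp only: count_map_cons)
  finally show ?thesis by (simp only: sum_list_map_upt_Suc)
qed

lemma coars_nil_count: "count_list (coars q) [] = (if q = [] then 1 else 0)"
proof (cases q)
  case (Cons x q')
  then show ?thesis by (simp add: coars.simps(2) count_concat count_map_cons_nil)
qed simp

lemma qsh_nil2[simp]: "qsh a [] = [a]"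
  by (cases a) auto

lemma qsh_nil_count: "count_list (qsh a b) [] = (if a = [] \<and> b = [] then 1 else 0)"
proof (cases a)
  case Nil then show ?thesis by simp
next
  case (Cons x a')
  then show ?thesis
  proof (cases b)
    case (Cons y b')
    then show ?thesis using \<open>a = x # a'\<close> by (simp add: count_map_cons_nil)
  qed simp
qed

lemma sum_if_nil: "(\<Sum>\<beta>\<leftarrow>xs. if \<beta> = [] then 1 else 0) = count_list xs []"
  by (induction xs) auto

lemma Y_nil_count: "count_list (Yq q s) [] = (if q = [] \<and> s = [] then 1 else 0)"
proof -
  have "count_list (Yq q s) [] = (\<Sum>\<beta>\<leftarrow>coars q. count_list (qsh \<beta> s) [])"
    unfolding Yq_def count_concat smm by simp
  also have "\<dots> = (\<Sum>\<beta>\<leftarrow>coars q. if \<beta> = [] \<and> s = [] then 1 else 0)"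
    by (simp add: qsh_nil_count)
  also have "\<dots> = (if s = [] then count_list (coars q) [] else 0)"
    by (cases "s = []") (simp_all add: sum_if_nil)
  finally show ?thesis by (simp add: coars_nil_count)
qed

lemma sum_concat_map: "(\<Sum>x\<leftarrow>concat xss. f x) = (\<Sum>xs\<leftarrow>xss. \<Sum>x\<leftarrow>xs. f x)"
  by (induction xss) auto

lemma sum_list_if_const: "(\<Sum>\<beta>\<leftarrow>xs. if P then f \<beta> else 0) = (if P then (\<Sum>\<beta>\<leftarrow>xs. f \<beta>) else (0::'a::comm_monoid_add))"
  by (induction xs) auto

lemma coars_sum:
  assumes "q \<noteq> []"
  shows "(\<Sum>\<beta>\<leftarrow>coars q. F (hd \<beta>) (tl \<beta>)) =
         (\<Sum>t\<in>{1..length q}. \<Sum>\<beta>\<leftarrow>coars (drop t q). F (sum_list (take t q)) \<beta>)"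
proof -
  obtain x q' where q: "q = x # q'" using assms by (cases q) auto
  show ?thesis unfolding q coars.simps(2) sum_concat_map smm
    by (simp only: sum_list_map_upt_Suc list.sel)
qed

lemma Y_nil2: "Yq q [] = coars q"
  unfolding Yq_def by (induction "coars q") auto

lemma Y_Nil1: "Yq [] s = [s]"
  unfolding Yq_def by simp

lemma coars_nonempty: "q \<noteq> [] \<Longrightarrow> \<beta> \<in> set (coars q) \<Longrightarrow> \<beta> \<noteq> []"
  using coars_nil_count[of q] count_list_0_iff by fastforce

lemma Y_count_sum: "count_list (Yq q s) \<gamma> = (\<Sum>\<beta>\<leftarrow>coars q. count_list (qsh \<beta> s) \<gamma>)"
  unfolding Yq_def count_concat smm ..

lemma sum_list_cong': "(\<And>x. x \<in> set xs \<Longrightarrow> f x = g x) \<Longrightarrow> sum_list (map f xs) = sum_list (map g xs)"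
  by (metis map_eq_conv)

lemma Y_cons_count:
  "count_list (Yq q s) (g # \<gamma>) =
     (\<Sum>t\<in>{1..length q}. if sum_list (take t q) = g then count_list (Yq (drop t q) s) \<gamma> else 0)
   + (if s = [] then 0 else
     (\<Sum>t\<in>{0..length q}. if sum_list (take t q) + hd s = g then count_list (Yq (drop t q) (tl s)) \<gamma> else 0))"
proof (cases "q = []")
  case True
  then show ?thesis by (cases s) (auto simp: Y_Nil1)
next
  case qne: False
  show ?thesis
  proof (cases s)
    case Nil
    then show ?thesis using qne unfolding Nil by (simp add: Y_nil2 coars_cons_count cong: if_cong)
  next
    case (Cons y s')
    have "count_list (Yq q s) (g # \<gamma>) = (\<Sum>\<beta>\<leftarrow>coars q. count_list (qsh \<beta> s) (g # \<gamma>))"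
      by (rule Y_count_sum)
    also have "\<dots> = (\<Sum>\<beta>\<leftarrow>coars q.
        (if hd \<beta> = g then count_list (qsh (tl \<beta>) s) \<gamma> else 0)
      + (if y = g then count_list (qsh \<beta> s') \<gamma> else 0)
      + (if hd \<beta> + y = g then count_list (qsh (tl \<beta>) s') \<gamma> else 0))"
    proof (rule sum_list_cong')
      fix \<beta> assume "\<beta> \<in> set (coars q)"
      then have "\<beta> \<noteq> []" using coars_nonempty qne by blast
      then obtain b \<beta>' where "\<beta> = b # \<beta>'" by (cases \<beta>) auto
      then show "count_list (qsh \<beta> s) (g # \<gamma>) = (if hd \<beta> = g then count_list (qsh (tl \<beta>) s) \<gamma> else 0)
      + (if y = g then count_list (qsh \<beta> s') \<gamma> else 0)
      + (if hd \<beta> + y = g then count_list (qsh (tl \<beta>) s') \<gamma> else 0)"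
        using Cons by (simp add: count_map_cons)
    qed
    also have "\<dots> = (\<Sum>\<beta>\<leftarrow>coars q. if hd \<beta> = g then count_list (qsh (tl \<beta>) s) \<gamma> else 0)
      + (if y = g then count_list (Yq q s') \<gamma> else 0)
      + (\<Sum>\<beta>\<leftarrow>coars q. if hd \<beta> + y = g then count_list (qsh (tl \<beta>) s') \<gamma> else 0)"
      by (simp add: sum_list_addf Y_count_sum)
    also have "\<dots> = (\<Sum>t\<in>{1..length q}. if sum_list (take t q) = g then count_list (Yq (drop t q) s) \<gamma> else 0)
      + (if y = g then count_list (Yq q s') \<gamma> else 0)
      + (\<Sum>t\<in>{1..length q}. if sum_list (take t q) + y = g then count_list (Yq (drop t q) s') \<gamma> else 0)"
      by (simp add: coars_sum[OF qne, where F="\<lambda>h t. if h = g then count_list (qsh t s) \<gamma> else 0"]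
                    coars_sum[OF qne, where F="\<lambda>h t. if h + y = g then count_list (qsh t s') \<gamma> else 0"]
                    Y_count_sum sum_list_if_const cong: if_cong)
    also have "\<dots> = (\<Sum>t\<in>{1..length q}. if sum_list (take t q) = g then count_list (Yq (drop t q) s) \<gamma> else 0)
      + (\<Sum>t\<in>{0..length q}. if sum_list (take t q) + y = g then count_list (Yq (drop t q) s') \<gamma> else 0)"
      by (simp add: sum.atLeast_Suc_atMost)
    finally show ?thesis using Cons by (simp cong: if_cong)
  qed
qed

lemma telescope_alt:
  fixes H :: "nat \<Rightarrow> int"
  shows "(\<Sum>i\<le>k. (-1)^i * H i) + (\<Sum>i<k. (-1)^i * H (Suc i)) = H 0"
  by (induction k) (auto simp: algebra_simps)

lemma telescope_alt2:
  fixes H :: "nat \<Rightarrow> int"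
  assumes "H 0 = 0"
  shows "(\<Sum>i\<in>{0..k}. (-1)^i * (H i + (if i < k then H (Suc i) else 0))) = 0"
proof -
  have "(\<Sum>i\<in>{0..k}. (-1)^i * (H i + (if i < k then H (Suc i) else 0)))
      = (\<Sum>i\<le>k. (-1)^i * H i) + (\<Sum>i\<le>k. if i < k then (-1)^i * H (Suc i) else 0)"
    unfolding atLeast0AtMost sum.distrib[symmetric] by (intro sum.cong) (auto simp: algebra_simps)
  also have "(\<Sum>i\<le>k. if i < k then (-1)^i * H (Suc i) else 0) = (\<Sum>i<k. (-1)^i * H (Suc i))"
    by (rule sum.mono_neutral_cong_right) auto
  finally show ?thesis using telescope_alt[where k=k and H=H] assms by simp
qed

lemma reindex1: "(\<Sum>t\<in>{1..i}. f (i - t)) = (\<Sum>j<(i::nat). (f j :: 'a::comm_monoid_add))"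
  by (rule sum.reindex_bij_witness[where i="\<lambda>j. i - j" and j="\<lambda>t. i - t"]) auto

lemma reindex0: "(\<Sum>t\<in>{0..i}. f (i - t)) = (\<Sum>j<Suc (i::nat). (f j :: 'a::comm_monoid_add))"
  by (rule sum.reindex_bij_witness[where i="\<lambda>j. i - j" and j="\<lambda>t. i - t"]) auto

lemma L1: "t \<le> i \<Longrightarrow> i \<le> length \<alpha> \<Longrightarrow> take t (rev (take i \<alpha>)) = rev (take t (drop (i-t) \<alpha>))"
  by (simp add: take_rev drop_take min_def)

lemma L2: "t \<le> i \<Longrightarrow> i \<le> length \<alpha> \<Longrightarrow> drop t (rev (take i \<alpha>)) = rev (take (i-t) \<alpha>)"
  by (simp add: drop_rev min_def)

lemma L3: "t \<le> i \<Longrightarrow> i < length \<alpha> \<Longrightarrow>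
  sum_list (take t (drop (i-t) \<alpha>)) + \<alpha> ! i = sum_list (take (Suc t) (drop (i-t) \<alpha>))"
  by (simp add: take_Suc_conv_app_nth)

lemma alt_identity:
  assumes "\<alpha> \<noteq> []"
  shows "(\<Sum>i\<in>{0..length \<alpha>}. (-1::int)^i * int (count_list (Yq (rev (take i \<alpha>)) (drop i \<alpha>)) \<gamma>)) = 0"
proof (cases \<gamma>)
  case Nil
  then show ?thesis using assms by (auto simp: Y_nil_count intro!: sum.neutral)
next
  case (Cons g \<gamma>')
  define k where "k = length \<alpha>"
  define G where "G j m = (if sum_list (take (m-j) (drop j \<alpha>)) = g then int (count_list (Yq (rev (take j \<alpha>)) (drop m \<alpha>)) \<gamma>') else 0)" for j m
  define H where "H m = (\<Sum>j<m. G j m)" for m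
  have key: "int (count_list (Yq (rev (take i \<alpha>)) (drop i \<alpha>)) \<gamma>) = H i + (if i < k then H (Suc i) else 0)"
    if i: "i \<le> k" for i
  proof -
    have len: "length (rev (take i \<alpha>)) = i" using i k_def by simp
    have A: "(\<Sum>t\<in>{1..i}. if sum_list (take t (rev (take i \<alpha>))) = g then int (count_list (Yq (drop t (rev (take i \<alpha>))) (drop i \<alpha>)) \<gamma>') else 0) = H i"
    proof -
      have "(\<Sum>t\<in>{1..i}. if sum_list (take t (rev (take i \<alpha>))) = g then int (count_list (Yq (drop t (rev (take i \<alpha>))) (drop i \<alpha>)) \<gamma>') else 0)
          = (\<Sum>t\<in>{1..i}. G (i - t) i)"
        using i k_def by (intro sum.cong) (auto simp: G_def L1 L2)
      also have "\<dots> = H i" unfolding H_def by (rule reindex1)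
      finally show ?thesis .
    qed
    have B: "(\<Sum>t\<in>{0..i}. if sum_list (take t (rev (take i \<alpha>))) + \<alpha> ! i = g then int (count_list (Yq (drop t (rev (take i \<alpha>))) (drop (Suc i) \<alpha>)) \<gamma>') else 0) = H (Suc i)"
      if ik: "i < k"
    proof -
      have "(\<Sum>t\<in>{0..i}. if sum_list (take t (rev (take i \<alpha>))) + \<alpha> ! i = g then int (count_list (Yq (drop t (rev (take i \<alpha>))) (drop (Suc i) \<alpha>)) \<gamma>') else 0)
          = (\<Sum>t\<in>{0..i}. G (i - t) (Suc i))"
        using i ik k_def by (intro sum.cong) (auto simp: G_def L1 L2 L3 Suc_diff_le)
      also have "\<dots> = H (Suc i)" unfolding H_def by (rule reindex0)
      finally show ?thesis .
    qed
    show ?thesis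
    proof (cases "i < k")
      case True
      then have "drop i \<alpha> \<noteq> []" "hd (drop i \<alpha>) = \<alpha> ! i" "tl (drop i \<alpha>) = drop (Suc i) \<alpha>"
        using k_def by (auto simp: hd_drop_conv_nth drop_Suc tl_drop)
      then show ?thesis using True A B unfolding Cons Y_cons_count len by (simp add: of_nat_sum if_distrib cong: if_cong)
    next
      case False
      then have "drop i \<alpha> = []" using k_def by simp
      then show ?thesis using False A unfolding Cons Y_cons_count len by (simp add: of_nat_sum if_distrib cong: if_cong)
    qed
  qed
  have H0: "H 0 = 0" unfolding H_def by simp
  have "(\<Sum>i\<in>{0..length \<alpha>}. (-1::int)^i * int (count_list (Yq (rev (take i \<alpha>)) (drop i \<alpha>)) \<gamma>))
      = (\<Sum>i\<in>{0..k}. (-1)^i * (H i + (if i < k then H (Suc i) else 0)))"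
    unfolding k_def using key k_def by (intro sum.cong) auto
  also have "\<dots> = 0" using telescope_alt2[where H=H and k=k] H0 by simp
  finally show ?thesis .
qed

lemma qcoeff_Nil[simp]: "qcoeff [] \<gamma> = 0"
  by (simp add: qcoeff_def)

lemma qcoeff_Cons[simp]: "qcoeff (x # xs) \<gamma> = (if snd x = \<gamma> then fst x else 0) + qcoeff xs \<gamma>"
  by (simp add: qcoeff_def)

lemma qcoeff_append[simp]: "qcoeff (xs @ ys) \<gamma> = qcoeff xs \<gamma> + qcoeff ys \<gamma>"
  by (simp add: qcoeff_def)

lemma qcoeff_concat: "qcoeff (concat xss) \<gamma> = (\<Sum>xs\<leftarrow>xss. qcoeff xs \<gamma>)"
  by (induction xss) auto

lemma qcoeff_neg: "qcoeff (map (\<lambda>(a, \<gamma>). (- a, \<gamma>)) xs) \<gamma> = - qcoeff xs \<gamma>"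
  by (induction xs) auto

lemma qcoeff_map_const: "qcoeff (map (\<lambda>\<gamma>. (a, \<gamma>)) l) \<gamma> = a * int (count_list l \<gamma>)"
  by (induction l) (auto simp: algebra_simps)

lemma qcoeff_qmult1: "qcoeff (qmult xs [(1, s)]) \<gamma> = (\<Sum>(a, \<beta>)\<leftarrow>xs. a * int (count_list (qsh \<beta> s) \<gamma>))"
  unfolding qmult_def
  by (induction xs) (auto simp: qcoeff_map_const)

lemma sum_list_pairs_qcoeff:
  assumes "finite B" "snd ` set xs \<subseteq> B"
  shows "(\<Sum>(a, \<beta>)\<leftarrow>xs. a * F \<beta>) = (\<Sum>\<beta>\<in>B. qcoeff xs \<beta> * F \<beta>)"
  using assms(2)
proof (induction xs)
  case Nil
  then show ?case by simp
next
  case (Cons x xs)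
  obtain a \<beta> where x: "x = (a, \<beta>)" by (cases x)
  have "\<beta> \<in> B" using Cons.prems x by auto
  have "(\<Sum>\<beta>'\<in>B. qcoeff (x # xs) \<beta>' * F \<beta>') = (\<Sum>\<beta>'\<in>B. (if \<beta> = \<beta>' then a * F \<beta>' else 0)) + (\<Sum>\<beta>'\<in>B. qcoeff xs \<beta>' * F \<beta>')"
    unfolding x sum.distrib[symmetric] by (intro sum.cong) (auto simp: algebra_simps)
  also have "(\<Sum>\<beta>'\<in>B. (if \<beta> = \<beta>' then a * F \<beta>' else 0)) = a * F \<beta>"
    using \<open>\<beta> \<in> B\<close> assms(1) by simp
  finally show ?case using Cons x by simp
qed

lemma sum_count_list:
  assumes "finite B" "set ys \<subseteq> B"
  shows "(\<Sum>\<beta>\<in>B. int (count_list ys \<beta>) * F \<beta>) = (\<Sum>\<beta>\<leftarrow>ys. (F \<beta> :: int))"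
  using assms(2)
proof (induction ys)
  case (Cons y ys)
  have "y \<in> B" using Cons.prems by auto
  have "(\<Sum>\<beta>\<in>B. int (count_list (y # ys) \<beta>) * F \<beta>) = (\<Sum>\<beta>\<in>B. (if y = \<beta> then F \<beta> else 0)) + (\<Sum>\<beta>\<in>B. int (count_list ys \<beta>) * F \<beta>)"
    unfolding sum.distrib[symmetric] by (intro sum.cong) (auto simp: algebra_simps)
  then show ?case using Cons \<open>y \<in> B\<close> assms(1) by simp
qed simp

lemma int_sum_list: "int (\<Sum>x\<leftarrow>xs. f x) = (\<Sum>x\<leftarrow>xs. int (f x))"
  by (induction xs) auto

lemma antip_closed:
  "length \<alpha> \<le> k \<Longrightarrow> qcoeff (antip k \<alpha>) \<gamma> = (-1)^length \<alpha> * int (count_list (coars (rev \<alpha>)) \<gamma>)"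
proof (induction k arbitrary: \<alpha> \<gamma>)
  case 0
  then show ?case by auto
next
  case (Suc k)
  show ?case
  proof (cases "\<alpha> = []")
    case True
    then show ?thesis by auto
  next
    case False
    define W where "W i = int (count_list (Yq (rev (take i \<alpha>)) (drop i \<alpha>)) \<gamma>)" for i
    have trm: "qcoeff (qmult (antip k (take i \<alpha>)) [(1, drop i \<alpha>)]) \<gamma> = (-1)^i * W i"
      if i: "i < length \<alpha>" for i
    proof -
      define p where "p = take i \<alpha>"
      define F where "F \<beta> = int (count_list (qsh \<beta> (drop i \<alpha>)) \<gamma>)" for \<beta>
      define B where "B = snd ` set (antip k p) \<union> set (coars (rev p))"
      have lp: "length p = i" "length p \<le> k" using i Suc.prems p_def by auto
      have fB: "finite B" unfolding B_def by simp
      have "qcoeff (qmult (antip k p) [(1, drop i \<alpha>)]) \<gamma> = (\<Sum>(a, \<beta>)\<leftarrow>antip k p. a * F \<beta>)"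
        unfolding qcoeff_qmult1 F_def ..
      also have "\<dots> = (\<Sum>\<beta>\<in>B. qcoeff (antip k p) \<beta> * F \<beta>)"
        by (rule sum_list_pairs_qcoeff[OF fB]) (auto simp: B_def)
      also have "\<dots> = (\<Sum>\<beta>\<in>B. (-1)^i * (int (count_list (coars (rev p)) \<beta>) * F \<beta>))"
        using Suc.IH[OF lp(2)] lp(1) by (simp add: algebra_simps)
      also have "\<dots> = (-1)^i * (\<Sum>\<beta>\<in>B. int (count_list (coars (rev p)) \<beta>) * F \<beta>)"
        by (simp add: sum_distrib_left)
      also have "\<dots> = (-1)^i * (\<Sum>\<beta>\<leftarrow>coars (rev p). F \<beta>)"
        using sum_count_list[OF fB, of "coars (rev p)" F] by (simp add: B_def)
      also have "\<dots> = (-1)^i * W i"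
        unfolding W_def Y_count_sum F_def p_def int_sum_list ..
      finally show ?thesis unfolding p_def .
    qed
    have "qcoeff (antip (Suc k) \<alpha>) \<gamma> = (\<Sum>i\<leftarrow>[0..<length \<alpha>]. - qcoeff (qmult (antip k (take i \<alpha>)) [(1, drop i \<alpha>)]) \<gamma>)"
      using False by (simp only: antip.simps if_False qcoeff_concat smm qcoeff_neg)
    also have "\<dots> = (\<Sum>i\<in>{..<length \<alpha>}. - ((-1)^i * W i))"
      by (simp add: sum_set_upt_conv_sum_list_nat[symmetric] atLeast0LessThan trm)
    also have "\<dots> = (-1)^length \<alpha> * W (length \<alpha>)"
    proof -
      have "(\<Sum>i\<in>{0..length \<alpha>}. (-1::int)^i * W i) = 0"
        using alt_identity[OF False, of \<gamma>] unfolding W_def .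
      then have "(\<Sum>i<length \<alpha>. (-1::int)^i * W i) + (-1)^length \<alpha> * W (length \<alpha>) = 0"
        by (simp add: atLeast0AtMost lessThan_Suc_atMost[symmetric])
      then show ?thesis by (simp add: sum_negf)
    qed
    also have "W (length \<alpha>) = int (count_list (coars (rev \<alpha>)) \<gamma>)"
      unfolding W_def by (simp add: Y_nil2)
    finally show ?thesis .
  qed
qed

lemma antipode_closed: "qcoeff (antipode \<alpha>) \<gamma> = (-1)^length \<alpha> * int (count_list (coars (rev \<alpha>)) \<gamma>)"
  unfolding antipode_def by (rule antip_closed) simp

definition PS :: "nat list \<Rightarrow> nat set" where
  "PS \<beta> = {sum_list (take i \<beta>) | i. 0 < i \<and> i \<le> length \<beta>}"

definition pos :: "nat list \<Rightarrow> bool" where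
  "pos \<beta> \<longleftrightarrow> (\<forall>x\<in>set \<beta>. 0 < x)"

lemma pos_sum_gt0: "pos \<beta> \<Longrightarrow> \<beta> \<noteq> [] \<Longrightarrow> 0 < sum_list \<beta>"
  unfolding pos_def by (cases \<beta>) auto

lemma pos_take: "pos \<beta> \<Longrightarrow> pos (take i \<beta>)" unfolding pos_def by (meson in_set_takeD)
lemma pos_drop: "pos \<beta> \<Longrightarrow> pos (drop i \<beta>)" unfolding pos_def by (meson in_set_dropD)

lemma ST_strict:
  assumes "pos q" "i < j" "j \<le> length q"
  shows "sum_list (take i q) < sum_list (take j q)"
proof -
  have "take j q = take i q @ take (j - i) (drop i q)"
    using assms take_add[of i "j - i" q] by simp
  moreover have "take (j - i) (drop i q) \<noteq> []" using assms by simp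
  moreover have "pos (take (j - i) (drop i q))" using assms pos_take pos_drop by blast
  ultimately show ?thesis using pos_sum_gt0 by fastforce
qed

lemma ST_inj:
  assumes "pos q" "i \<le> length q" "j \<le> length q" "sum_list (take i q) = sum_list (take j q)"
  shows "i = j"
proof (rule ccontr)
  assume "i \<noteq> j"
  then consider "i < j" | "j < i" by linarith
  then show False using ST_strict[OF assms(1)] assms by cases force+
qed

lemma PS_Cons: "PS (b # \<beta>) = insert b ((+) b ` PS \<beta>)"
proof -
  have "PS (b # \<beta>) = {sum_list (take i (b # \<beta>)) | i. 0 < i \<and> i \<le> Suc (length \<beta>)}"
    unfolding PS_def by simp
  also have "\<dots> = {b + sum_list (take j \<beta>) | j. j \<le> length \<beta>}"
  proof safe
    fix i assume "0 < i" "i \<le> Suc (length \<beta>)"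
    then show "\<exists>j. sum_list (take i (b # \<beta>)) = b + sum_list (take j \<beta>) \<and> j \<le> length \<beta>"
      by (intro exI[of _ "i - 1"]) (cases i; auto)
  next
    fix j assume "j \<le> length \<beta>"
    then show "\<exists>i. b + sum_list (take j \<beta>) = sum_list (take i (b # \<beta>)) \<and> 0 < i \<and> i \<le> Suc (length \<beta>)"
      by (intro exI[of _ "Suc j"]) auto
  qed
  also have "\<dots> = insert b ((+) b ` PS \<beta>)"
    unfolding PS_def
  proof safe
    fix j assume "j \<le> length \<beta>" "b + sum_list (take j \<beta>) \<notin> (+) b ` {sum_list (take i \<beta>) |i. 0 < i \<and> i \<le> length \<beta>}"
    then show "b + sum_list (take j \<beta>) = b" by (cases j) auto
  next
    show "\<exists>j. b = b + sum_list (take j \<beta>) \<and> j \<le> length \<beta>" by (intro exI[of _ 0]) auto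
  qed auto
  finally show ?thesis .
qed

lemma PS_pos: "pos \<beta> \<Longrightarrow> y \<in> PS \<beta> \<Longrightarrow> 0 < y"
proof -
  assume a: "pos \<beta>" "y \<in> PS \<beta>"
  then obtain i where i: "0 < i" "i \<le> length \<beta>" "y = sum_list (take i \<beta>)" unfolding PS_def by blast
  have "take i \<beta> \<noteq> []" using i by (cases \<beta>) auto
  then show "0 < y" using pos_sum_gt0[OF pos_take[OF a(1)]] i by blast
qed

lemma PS_shift:
  assumes "pos q" "1 \<le> t" "t \<le> length q" "0 < y"
  shows "sum_list (take t q) + y \<in> PS q \<longleftrightarrow> y \<in> PS (drop t q)"
proof
  assume "sum_list (take t q) + y \<in> PS q"
  then obtain j where j: "0 < j" "j \<le> length q" "sum_list (take t q) + y = sum_list (take j q)"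
    unfolding PS_def by auto
  have "t < j"
  proof (rule ccontr)
    assume "\<not> t < j"
    then have "sum_list (take j q) \<le> sum_list (take t q)"
      using ST_strict[OF assms(1), of j t] assms by (cases "j = t") auto
    then show False using j assms by simp
  qed
  have "take j q = take t q @ take (j - t) (drop t q)"
    using \<open>t < j\<close> take_add[of t "j - t" q] by simp
  then have "y = sum_list (take (j - t) (drop t q))" using j by simp
  then show "y \<in> PS (drop t q)" unfolding PS_def using \<open>t < j\<close> j by auto
next
  assume "y \<in> PS (drop t q)"
  then obtain i where i: "0 < i" "i \<le> length (drop t q)" "y = sum_list (take i (drop t q))"
    unfolding PS_def by auto
  have "take (t + i) q = take t q @ take i (drop t q)" by (simp add: take_add)
  then have "sum_list (take t q) + y = sum_list (take (t + i) q)" using i by simp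
  then show "sum_list (take t q) + y \<in> PS q" unfolding PS_def using i assms by auto
qed

lemma sum_list_nat_eq0: "sum_list (\<beta>::nat list) = 0 \<longleftrightarrow> (\<forall>x\<in>set \<beta>. x = 0)"
  by (induction \<beta>) auto

lemma coars_count_pos:
  "pos q \<Longrightarrow> count_list (coars q) \<beta> = (if pos \<beta> \<and> sum_list \<beta> = sum_list q \<and> PS \<beta> \<subseteq> PS q then 1 else 0)"
proof (induction q arbitrary: \<beta> rule: coars.induct)
  case 1
  show ?case
  proof (cases \<beta>)
    case Nil
    then show ?thesis by (simp add: pos_def PS_def)
  next
    case (Cons b \<beta>')
    have "pos \<beta> \<Longrightarrow> sum_list \<beta> \<noteq> 0" using pos_sum_gt0 Cons by blast
    then show ?thesis using Cons by (simp add: pos_def; linarith)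
  qed
next
  case (2 x q')
  define Q where "Q = x # q'"
  have posQ: "pos Q" using 2 Q_def by simp
  have IH: "count_list (coars (drop t Q)) \<beta> =
      (if pos \<beta> \<and> sum_list \<beta> = sum_list (drop t Q) \<and> PS \<beta> \<subseteq> PS (drop t Q) then 1 else 0)"
    if "t \<in> {1..length Q}" for t \<beta>
  proof -
    have "t \<in> set [1..<Suc (length (x # q'))]" using that Q_def by auto
    from 2(1)[OF this] show ?thesis using pos_drop[OF posQ] Q_def by simp
  qed
  have "count_list (coars Q) \<beta> = (if pos \<beta> \<and> sum_list \<beta> = sum_list Q \<and> PS \<beta> \<subseteq> PS Q then 1 else 0)"
  proof (cases \<beta>)
    case Nil
    then show ?thesis using posQ by (simp add: coars_nil_count Q_def pos_def)
  next
    case (Cons b \<beta>')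
    have cnt: "count_list (coars Q) \<beta> = (\<Sum>t\<in>{1..length Q}. if sum_list (take t Q) = b then
        (if pos \<beta>' \<and> sum_list \<beta>' = sum_list (drop t Q) \<and> PS \<beta>' \<subseteq> PS (drop t Q) then 1 else 0) else 0)"
      unfolding Cons using IH by (simp add: coars_cons_count Q_def cong: if_cong)
    show ?thesis
    proof (cases "\<exists>t\<in>{1..length Q}. sum_list (take t Q) = b")
      case True
      then obtain t0 where t0: "t0 \<in> {1..length Q}" "sum_list (take t0 Q) = b" by blast
      have uniq: "t \<in> {1..length Q} \<Longrightarrow> sum_list (take t Q) = b \<Longrightarrow> t = t0" for t
        using ST_inj[OF posQ] t0 by auto
      have uniq': "b = sum_list (take t Q) \<Longrightarrow> t \<in> {1..length Q} \<Longrightarrow> t = t0" for t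
        using uniq by auto
      have "count_list (coars Q) \<beta> = (if pos \<beta>' \<and> sum_list \<beta>' = sum_list (drop t0 Q) \<and> PS \<beta>' \<subseteq> PS (drop t0 Q) then 1 else 0)"
        unfolding cnt
        by (subst sum.remove[OF _ t0(1)]) (auto simp: t0 intro!: sum.neutral dest: uniq uniq')
      also have "\<dots> = (if pos \<beta> \<and> sum_list \<beta> = sum_list Q \<and> PS \<beta> \<subseteq> PS Q then 1 else 0)"
      proof -
        have b0: "0 < b"
          using t0 pos_sum_gt0[OF pos_take[OF posQ, of t0]] Q_def by auto
        have sumQ: "sum_list Q = b + sum_list (drop t0 Q)"
          using t0 by (metis append_take_drop_id sum_list_append)
        have bPS: "b \<in> PS Q" unfolding PS_def using t0 by auto
        have "pos \<beta>' \<Longrightarrow> (PS \<beta>' \<subseteq> PS (drop t0 Q)) \<longleftrightarrow> ((+) b ` PS \<beta>' \<subseteq> PS Q)"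
          using PS_shift[OF posQ, of t0] t0 PS_pos by auto
        moreover have "pos \<beta> \<longleftrightarrow> pos \<beta>'" using b0 Cons by (simp add: pos_def)
        moreover have "sum_list \<beta> = sum_list Q \<longleftrightarrow> sum_list \<beta>' = sum_list (drop t0 Q)"
          using Cons sumQ by simp
        moreover have "PS \<beta> \<subseteq> PS Q \<longleftrightarrow> (+) b ` PS \<beta>' \<subseteq> PS Q"
          using Cons bPS by (simp add: PS_Cons)
        ultimately have "(pos \<beta>' \<and> sum_list \<beta>' = sum_list (drop t0 Q) \<and> PS \<beta>' \<subseteq> PS (drop t0 Q))
            \<longleftrightarrow> (pos \<beta> \<and> sum_list \<beta> = sum_list Q \<and> PS \<beta> \<subseteq> PS Q)"
          by blast
        then show ?thesis by simp
      qed
      finally show ?thesis .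
    next
      case False
      then have "count_list (coars Q) \<beta> = 0" unfolding cnt by (auto intro!: sum.neutral)
      moreover have "\<not> (PS \<beta> \<subseteq> PS Q)"
      proof
        assume "PS \<beta> \<subseteq> PS Q"
        then have "b \<in> PS Q" using Cons by (simp add: PS_Cons)
        then show False using False unfolding PS_def by auto
      qed
      ultimately show ?thesis by simp
    qed
  qed
  then show ?case unfolding Q_def .
qed

lemma comp_facts:
  assumes K: "K \<subseteq> {1..n-1}" and n: "1 \<le> n"
  defines "ps \<equiv> sorted_list_of_set K"
  defines "Lx \<equiv> 0 # ps @ [n]"
  shows "comp n K = map (\<lambda>j. Lx ! Suc j - Lx ! j) [0..<Suc (length ps)]"
    and "length ps = card K" and "set ps = K"
    and "sorted_wrt (<) Lx"
proof -
  have fin: "finite K" using K finite_subset by blast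
  show sp: "set ps = K" "length ps = card K" unfolding ps_def using fin by auto
  have s1: "sorted_wrt (<) ps" unfolding ps_def by simp
  have lt: "x < n" if "x \<in> set ps" for x
  proof -
    have "x \<in> K" using that sp by simp
    then have "x \<le> n - 1" using K by auto
    then show ?thesis using n by linarith
  qed
  have gt: "0 < x" if "x \<in> set ps" for x using that sp K by auto
  show "sorted_wrt (<) Lx" unfolding Lx_def using s1 lt gt n
    by (auto simp: sorted_wrt_append)
  show "comp n K = map (\<lambda>j. Lx ! Suc j - Lx ! j) [0..<Suc (length ps)]"
  proof (rule nth_equalityI)
    show "length (comp n K) = length (map (\<lambda>j. Lx ! Suc j - Lx ! j) [0..<Suc (length ps)])"
      unfolding comp_def ps_def[symmetric] by simp
  next
    fix j assume "j < length (comp n K)"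
    then have j: "j < Suc (length ps)" unfolding comp_def ps_def[symmetric] by simp
    have "comp n K ! j = (ps @ [n]) ! j - (0 # ps) ! j"
      unfolding comp_def ps_def[symmetric] Let_def using j by simp
    also have "(ps @ [n]) ! j = Lx ! Suc j" unfolding Lx_def by simp
    also have "(0 # ps) ! j = Lx ! j" unfolding Lx_def using j
      by (cases j) (auto simp: nth_append)
    finally show "comp n K ! j = map (\<lambda>j. Lx ! Suc j - Lx ! j) [0..<Suc (length ps)] ! j"
      using j by (simp del: upt_Suc)
  qed
qed

lemma telescope_take:
  fixes Lx :: "nat list"
  assumes "sorted_wrt (<) Lx" "i \<le> Suc m" "Suc m < length Lx"
  shows "sum_list (take i (map (\<lambda>j. Lx ! Suc j - Lx ! j) [0..<Suc m])) = Lx ! i - Lx ! 0"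
  using assms(2)
proof (induction i)
  case 0 then show ?case by simp
next
  case (Suc i)
  have "take (Suc i) (map (\<lambda>j. Lx ! Suc j - Lx ! j) [0..<Suc m]) =
        take i (map (\<lambda>j. Lx ! Suc j - Lx ! j) [0..<Suc m]) @ [Lx ! Suc i - Lx ! i]"
    using Suc.prems by (simp add: take_Suc_conv_app_nth del: upt_Suc)
  moreover have "Lx ! 0 \<le> Lx ! i" "Lx ! i < Lx ! Suc i"
    using assms(1,3) Suc.prems sorted_wrt_nth_less[OF assms(1)]
    by (cases "i = 0"; force)+
  ultimately show ?case using Suc by simp
qed

lemma comp_props:
  assumes K: "K \<subseteq> {1..n-1}" and n: "1 \<le> n"
  shows "length (comp n K) = card K + 1"
    and "pos (comp n K)"
    and "sum_list (comp n K) = n"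
    and "PS (comp n K) = insert n K"
    and "{sum_list (take j (comp n K)) | j. j < length (comp n K)} = insert 0 K"
proof -
  define ps where "ps = sorted_list_of_set K"
  define Lx where "Lx = 0 # ps @ [n]"
  note cf = comp_facts[OF K n, folded ps_def, folded Lx_def]
  have lenLx: "length Lx = length ps + 2" unfolding Lx_def by simp
  have L0: "Lx ! 0 = 0" unfolding Lx_def by simp
  have st: "sum_list (take i (comp n K)) = Lx ! i" if "i \<le> Suc (length ps)" for i
    using telescope_take[OF cf(4) that] lenLx L0 unfolding cf(1) by (simp del: upt_Suc)
  show len: "length (comp n K) = card K + 1" using cf by simp
  have lc: "length (comp n K) = Suc (length ps)" using cf(1) by simp
  show "pos (comp n K)" unfolding pos_def cf(1)
    using sorted_wrt_nth_less[OF cf(4)] lenLx by auto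
  show "sum_list (comp n K) = n"
    using st[of "Suc (length ps)"] cf(1) unfolding Lx_def by (simp add: nth_append del: upt_Suc)
  have setLx: "set Lx = insert 0 (insert n K)" unfolding Lx_def using cf(3) by auto
  show "PS (comp n K) = insert n K"
  proof -
    have "PS (comp n K) = {Lx ! i | i. 0 < i \<and> i \<le> Suc (length ps)}"
      unfolding PS_def lc
    proof safe
      fix i assume "0 < i" "i \<le> Suc (length ps)"
      then show "\<exists>ia. sum_list (take i (comp n K)) = Lx ! ia \<and> 0 < ia \<and> ia \<le> Suc (length ps)"
        using st by blast
    next
      fix i assume "0 < i" "i \<le> Suc (length ps)"
      then show "\<exists>ia. Lx ! i = sum_list (take ia (comp n K)) \<and> 0 < ia \<and> ia \<le> Suc (length ps)"
        using st by (intro exI[of _ i]) auto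
    qed
    also have "\<dots> = set (ps @ [n])"
    proof safe
      fix i assume "0 < i" "i \<le> Suc (length ps)"
      then show "Lx ! i \<in> set (ps @ [n])" unfolding Lx_def
        by (cases i) (auto simp: nth_append)
    next
      fix x assume "x \<in> set (ps @ [n])"
      then obtain j where "j < length (ps @ [n])" "(ps @ [n]) ! j = x" by (meson in_set_conv_nth)
      then show "\<exists>i. x = Lx ! i \<and> 0 < i \<and> i \<le> Suc (length ps)"
        unfolding Lx_def by (intro exI[of _ "Suc j"]) auto
    qed
    finally show ?thesis using cf(3) by simp
  qed
  show "{sum_list (take j (comp n K)) | j. j < length (comp n K)} = insert 0 K"
  proof -
    have "{sum_list (take j (comp n K)) | j. j < length (comp n K)} = {Lx ! i | i. i \<le> length ps}"
      unfolding lc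
    proof safe
      fix i assume "i < Suc (length ps)"
      then show "\<exists>ia. sum_list (take i (comp n K)) = Lx ! ia \<and> ia \<le> length ps"
        using st by (intro exI[of _ i]) auto
    next
      fix i assume "i \<le> length ps"
      then show "\<exists>ia. Lx ! i = sum_list (take ia (comp n K)) \<and> ia < Suc (length ps)"
        using st by (intro exI[of _ i]) auto
    qed
    also have "\<dots> = set (0 # ps)"
    proof safe
      fix i assume "i \<le> length ps"
      then show "Lx ! i \<in> set (0 # ps)" unfolding Lx_def
        by (cases i) (auto simp: nth_append)
    next
      fix x assume "x \<in> set (0 # ps)"
      then obtain j where "j < length (0 # ps)" "(0 # ps) ! j = x" by (meson in_set_conv_nth)
      then show "\<exists>i. x = Lx ! i \<and> i \<le> length ps"
        unfolding Lx_def by (intro exI[of _ j]) (auto simp: nth_append nth_Cons split: nat.splits)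
    qed
    finally show ?thesis using cf(3) by simp
  qed
qed

lemma PS_rev: "PS (rev \<beta>) = (\<lambda>x. sum_list \<beta> - x) ` {sum_list (take j \<beta>) | j. j < length \<beta>}"
proof -
  have key: "sum_list (take i (rev \<beta>)) = sum_list \<beta> - sum_list (take (length \<beta> - i) \<beta>)" if "i \<le> length \<beta>" for i
  proof -
    have "take i (rev \<beta>) = rev (drop (length \<beta> - i) \<beta>)" by (simp add: take_rev)
    moreover have "sum_list \<beta> = sum_list (take (length \<beta> - i) \<beta>) + sum_list (drop (length \<beta> - i) \<beta>)"
      by (metis append_take_drop_id sum_list_append)
    ultimately show ?thesis by simp
  qed
  show ?thesis unfolding PS_def
  proof safe
    fix i assume i: "0 < i" "i \<le> length (rev \<beta>)"
    then show "sum_list (take i (rev \<beta>)) \<in> (\<lambda>x. sum_list \<beta> - x) ` {sum_list (take j \<beta>) |j. j < length \<beta>}"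
      using key[of i] by (intro image_eqI[where x="sum_list (take (length \<beta> - i) \<beta>)"]) auto
  next
    fix j assume j: "j < length \<beta>"
    then show "\<exists>i. sum_list \<beta> - sum_list (take j \<beta>) = sum_list (take i (rev \<beta>)) \<and> 0 < i \<and> i \<le> length (rev \<beta>)"
      using key[of "length \<beta> - j"] by (intro exI[of _ "length \<beta> - j"]) auto
  qed
qed

lemma pos_rev: "pos (rev \<beta>) = pos \<beta>" by (simp add: pos_def)

theorem antipode_sets:
  assumes K: "K \<subseteq> {1..n-1}" and R: "R \<subseteq> {1..n-1}" and n: "1 \<le> n"
  shows "qcoeff (antipode (comp n K)) (comp n R) = (-1)^(card K + 1) * (if R \<subseteq> tildeS n K then 1 else 0)"
proof -
  note cK = comp_props[OF K n] and cR = comp_props[OF R n]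
  have "PS (rev (comp n K)) = (\<lambda>x. n - x) ` insert 0 K"
    using PS_rev[of "comp n K"] cK by simp
  also have "\<dots> = insert n (tildeS n K)"
    unfolding tildeS_def using K by force
  finally have PSr: "PS (rev (comp n K)) = insert n (tildeS n K)" .
  have nR: "n \<notin> R" using R n by auto
  have "count_list (coars (rev (comp n K))) (comp n R) = (if R \<subseteq> tildeS n K then 1 else 0)"
    using coars_count_pos[of "rev (comp n K)" "comp n R"] cK cR PSr nR
    by (auto simp: pos_rev)
  then show ?thesis using antipode_closed cK by simp
qed

definition blk :: "nat set \<Rightarrow> nat \<Rightarrow> nat" where
  "blk X p = card {x\<in>X. x < p}"

definition lexless :: "(nat \<Rightarrow> nat) \<Rightarrow> nat \<Rightarrow> nat \<Rightarrow> bool" where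
  "lexless w a b \<longleftrightarrow> w a < w b \<or> (w a = w b \<and> a < b)"

definition std :: "nat \<Rightarrow> (nat \<Rightarrow> nat) \<Rightarrow> nat \<Rightarrow> nat" where
  "std n w a = (if a \<in> {1..n} then card {b\<in>{1..n}. lexless w b a} + 1 else a)"

lemma lexless_trans: "lexless w a b \<Longrightarrow> lexless w b c \<Longrightarrow> lexless w a c"
  unfolding lexless_def by auto

lemma lexless_irrefl: "\<not> lexless w a a"
  unfolding lexless_def by auto

lemma lexless_total: "a \<noteq> b \<Longrightarrow> lexless w a b \<or> lexless w b a"
  unfolding lexless_def by auto

lemma std_mono:
  assumes "a \<in> {1..n}" "b \<in> {1..n}" "lexless w a b"
  shows "std n w a < std n w b"
proof -
  have "{c\<in>{1..n}. lexless w c a} \<subset> {c\<in>{1..n}. lexless w c b}"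
    using assms lexless_trans lexless_irrefl by blast
  then have "card {c\<in>{1..n}. lexless w c a} < card {c\<in>{1..n}. lexless w c b}"
    by (intro psubset_card_mono) auto
  then show ?thesis using assms unfolding std_def by simp
qed

lemma std_less_iff:
  assumes "a \<in> {1..n}" "b \<in> {1..n}"
  shows "std n w a < std n w b \<longleftrightarrow> lexless w a b"
proof (cases "a = b")
  case True then show ?thesis by (simp add: lexless_irrefl)
next
  case False
  note m1 = std_mono[OF assms, where w=w] and m2 = std_mono[OF assms(2,1), where w=w]
  show ?thesis
  proof
    assume "std n w a < std n w b"
    then show "lexless w a b" using m2 lexless_total[OF False, of w] by fastforce
  qed (rule m1)
qed

lemma std_range:
  assumes "a \<in> {1..n}"
  shows "std n w a \<in> {1..n}"
proof -
  have "{b\<in>{1..n}. lexless w b a} \<subseteq> {1..n} - {a}" using lexless_irrefl by auto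
  then have "card {b\<in>{1..n}. lexless w b a} \<le> card ({1..n} - {a})" by (intro card_mono) auto
  also have "\<dots> = n - 1" using assms by simp
  finally show ?thesis using assms unfolding std_def by auto
qed

lemma std_permutes: "std n w permutes {1..n}"
proof (rule bij_imp_permutes)
  have inj: "inj_on (std n w) {1..n}"
  proof (rule inj_onI)
    fix a b assume ab: "a \<in> {1..n}" "b \<in> {1..n}" "std n w a = std n w b"
    show "a = b"
    proof (rule ccontr)
      assume "a \<noteq> b"
      then show False using lexless_total[of a b w] std_mono[OF ab(1,2), where w=w] std_mono[OF ab(2,1), where w=w] ab(3) by auto
    qed
  qed
  moreover have "std n w ` {1..n} = {1..n}"
    using endo_inj_surj[OF _ _ inj] std_range by blast
  ultimately show "bij_betw (std n w) {1..n} {1..n}" unfolding bij_betw_def by simp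
next
  fix x assume "x \<notin> {1..n}" then show "std n w x = x" by (simp add: std_def del: atLeastAtMost_iff)
qed

lemma std_cong:
  assumes "\<And>a. a \<in> {1..n} \<Longrightarrow> w a = w' a"
  shows "std n w = std n w'"
proof
  fix a show "std n w a = std n w' a"
  proof (cases "a \<in> {1..n}")
    case True
    have "{b\<in>{1..n}. lexless w b a} = {b\<in>{1..n}. lexless w' b a}"
      unfolding lexless_def using assms True by auto
    then show ?thesis unfolding std_def by simp
  next
    case False then show ?thesis by (simp add: std_def del: atLeastAtMost_iff)
  qed
qed

lemma perm_rank:
  assumes v: "v permutes {1..n}" and a: "a \<in> {1..n}"
  shows "card {b\<in>{1..n}. v b < v a} = v a - 1"
proof -
  have va: "v a \<in> {1..n}" using permutes_in_image[OF v] a by simp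
  have img: "v ` {b\<in>{1..n}. v b < v a} = {1..<v a}"
  proof (rule set_eqI, rule iffI)
    fix c assume "c \<in> v ` {b\<in>{1..n}. v b < v a}"
    then obtain b where b: "b \<in> {1..n}" "v b < v a" "c = v b" by blast
    have "v b \<in> {1..n}" using permutes_in_image[OF v] b(1) by simp
    then show "c \<in> {1..<v a}" using b by simp
  next
    fix c assume c: "c \<in> {1..<v a}"
    then have cN: "c \<in> {1..n}" using va by simp
    have ic: "inv v c \<in> {1..n}" using permutes_in_image[OF permutes_inv[OF v]] cN by simp
    have vic: "v (inv v c) = c" using permutes_inverses(1)[OF v] by simp
    show "c \<in> v ` {b\<in>{1..n}. v b < v a}"
      using ic vic c by (intro image_eqI[where x="inv v c"]) auto
  qed
  have inj: "inj_on v {b\<in>{1..n}. v b < v a}"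
    using permutes_inj[OF v] inj_on_subset by blast
  have "card {b\<in>{1..n}. v b < v a} = card (v ` {b\<in>{1..n}. v b < v a})"
    using card_image[OF inj] by simp
  also have "\<dots> = v a - 1" unfolding img by simp
  finally show ?thesis .
qed

lemma std_unique:
  assumes "v permutes {1..n}" "\<And>a b. a \<in> {1..n} \<Longrightarrow> b \<in> {1..n} \<Longrightarrow> v a < v b \<longleftrightarrow> lexless w a b"
  shows "v = std n w"
proof
  fix a show "v a = std n w a"
  proof (cases "a \<in> {1..n}")
    case True
    have va: "v a \<in> {1..n}" using permutes_in_image[OF assms(1)] True by simp
    have "{b\<in>{1..n}. v b < v a} = {b\<in>{1..n}. lexless w b a}"
    proof (rule Collect_cong)
      fix b show "(b \<in> {1..n} \<and> v b < v a) = (b \<in> {1..n} \<and> lexless w b a)"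
        using assms(2)[of b a] True by blast
    qed
    then show ?thesis using perm_rank[OF assms(1) True] va True unfolding std_def by simp
  next
    case False
    then show ?thesis by (simp add: std_def permutes_not_in[OF assms(1) False] del: atLeastAtMost_iff)
  qed
qed

lemma blk_Suc: "blk X (Suc p) = blk X p + (if p \<in> X then 1 else 0)"
proof -
  have fin: "finite {x\<in>X. x < p}" by simp
  show ?thesis
  proof (cases "p \<in> X")
    case True
    then have "{x\<in>X. x < Suc p} = insert p {x\<in>X. x < p}" by auto
    then show ?thesis using True fin unfolding blk_def by simp
  next
    case False
    then have "{x\<in>X. x < Suc p} = {x\<in>X. x < p}" using less_Suc_eq by auto
    then show ?thesis using False unfolding blk_def by simp
  qed
qed

lemma blk_mono: "p \<le> q \<Longrightarrow> blk X p \<le> blk X q"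
  unfolding blk_def by (rule card_mono) auto

lemma blk_less_iff:
  assumes p: "p \<in> {1..n}"
  shows "blk X p < i \<longleftrightarrow> p \<le> card {q\<in>{1..n}. blk X q < i}"
proof
  assume "blk X p < i"
  then have "{1..p} \<subseteq> {q\<in>{1..n}. blk X q < i}"
    using p blk_mono[of _ p X] by fastforce
  then have "card {1..p} \<le> card {q\<in>{1..n}. blk X q < i}" by (intro card_mono) auto
  then show "p \<le> card {q\<in>{1..n}. blk X q < i}" by simp
next
  assume le: "p \<le> card {q\<in>{1..n}. blk X q < i}"
  show "blk X p < i"
  proof (rule ccontr)
    assume "\<not> blk X p < i"
    have "{q\<in>{1..n}. blk X q < i} \<subseteq> {1..<p}"
    proof
      fix q assume q: "q \<in> {q\<in>{1..n}. blk X q < i}"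
      have "q < p"
      proof (rule ccontr)
        assume "\<not> q < p"
        then have "blk X p \<le> blk X q" by (intro blk_mono) simp
        then show False using q \<open>\<not> blk X p < i\<close> by simp
      qed
      then show "q \<in> {1..<p}" using q by simp
    qed
    then have "card {q\<in>{1..n}. blk X q < i} \<le> card {1..<p}" by (intro card_mono) auto
    then show False using le p by simp linarith
  qed
qed

definition same_content :: "nat \<Rightarrow> (nat \<Rightarrow> nat) \<Rightarrow> nat set \<Rightarrow> bool" where
  "same_content n w X \<longleftrightarrow> (\<forall>i. card {a\<in>{1..n}. w a = i} = card {p\<in>{1..n}. blk X p = i})"

lemma content_lt:
  assumes "same_content n w X"
  shows "card {a\<in>{1..n}. w a < i} = card {p\<in>{1..n}. blk X p < i}"
proof (induction i)
  case 0 then show ?case by simp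
next
  case (Suc i)
  have "{a\<in>{1..n}. w a < Suc i} = {a\<in>{1..n}. w a < i} \<union> {a\<in>{1..n}. w a = i}" by auto
  then have "card {a\<in>{1..n}. w a < Suc i} = card {a\<in>{1..n}. w a < i} + card {a\<in>{1..n}. w a = i}"
    by (simp add: card_Un_disjoint disjoint_iff)
  moreover have "{p\<in>{1..n}. blk X p < Suc i} = {p\<in>{1..n}. blk X p < i} \<union> {p\<in>{1..n}. blk X p = i}" by auto
  then have "card {p\<in>{1..n}. blk X p < Suc i} = card {p\<in>{1..n}. blk X p < i} + card {p\<in>{1..n}. blk X p = i}"
    by (simp add: card_Un_disjoint disjoint_iff)
  ultimately show ?case using Suc assms unfolding same_content_def by simp
qed

lemma std_blk:
  assumes sc: "same_content n w X" and a: "a \<in> {1..n}"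
  shows "blk X (std n w a) = w a"
proof -
  define i where "i = w a"
  define L where "L = card {p\<in>{1..n}. blk X p < i}"
  define E where "E = card {p\<in>{1..n}. blk X p = i}"
  have "{b\<in>{1..n}. lexless w b a} = {b\<in>{1..n}. w b < i} \<union> {b\<in>{1..n}. w b = i \<and> b < a}"
    unfolding lexless_def i_def by auto
  then have c1: "card {b\<in>{1..n}. lexless w b a} = card {b\<in>{1..n}. w b < i} + card {b\<in>{1..n}. w b = i \<and> b < a}"
    by (simp add: card_Un_disjoint disjoint_iff)
  have "{b\<in>{1..n}. w b = i \<and> b < a} \<subset> {b\<in>{1..n}. w b = i}" using a i_def by auto
  then have "card {b\<in>{1..n}. w b = i \<and> b < a} < card {b\<in>{1..n}. w b = i}"
    by (intro psubset_card_mono) auto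
  moreover have "card {b\<in>{1..n}. w b = i} = E" using sc unfolding E_def same_content_def by simp
  ultimately have c2: "card {b\<in>{1..n}. w b = i \<and> b < a} < E" by simp
  have c3: "card {b\<in>{1..n}. w b < i} = L" unfolding L_def by (rule content_lt[OF sc])
  have c4: "card {p\<in>{1..n}. blk X p < Suc i} = L + E"
  proof -
    have "{p\<in>{1..n}. blk X p < Suc i} = {p\<in>{1..n}. blk X p < i} \<union> {p\<in>{1..n}. blk X p = i}" by auto
    then show ?thesis unfolding L_def E_def by (simp add: card_Un_disjoint disjoint_iff)
  qed
  define s where "s = std n w a"
  have s: "s = card {b\<in>{1..n}. lexless w b a} + 1" unfolding s_def std_def using a by simp
  have sN: "s \<in> {1..n}" unfolding s_def by (rule std_range[OF a])
  have "blk X s < Suc i" using blk_less_iff[OF sN, of X "Suc i"] c4 s c1 c2 c3 by simp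
  moreover have "\<not> blk X s < i" using blk_less_iff[OF sN, of X i] s c1 c3 unfolding L_def by simp
  ultimately show ?thesis unfolding s_def i_def by simp
qed

lemma content_perm:
  assumes v: "v permutes {1..n}"
  shows "card {a\<in>{1..n}. f (v a) = i} = card {p\<in>{1..n}. f p = i}"
proof -
  have img: "v ` {a\<in>{1..n}. f (v a) = i} = {p\<in>{1..n}. f p = i}"
  proof (rule set_eqI, rule iffI)
    fix c assume "c \<in> v ` {a\<in>{1..n}. f (v a) = i}"
    then obtain b where b: "b \<in> {1..n}" "f (v b) = i" "c = v b" by blast
    have "v b \<in> {1..n}" using permutes_in_image[OF v] b(1) by simp
    then show "c \<in> {p\<in>{1..n}. f p = i}" using b by simp
  next
    fix c assume c: "c \<in> {p\<in>{1..n}. f p = i}"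
    have ic: "inv v c \<in> {1..n}" using permutes_in_image[OF permutes_inv[OF v]] c by simp
    have vic: "v (inv v c) = c" using permutes_inverses(1)[OF v] by simp
    show "c \<in> v ` {a\<in>{1..n}. f (v a) = i}"
      using ic vic c by (intro image_eqI[where x="inv v c"]) auto
  qed
  have inj: "inj_on v {a\<in>{1..n}. f (v a) = i}"
    using permutes_inj[OF v] inj_on_subset by blast
  have "card {a\<in>{1..n}. f (v a) = i} = card (v ` {a\<in>{1..n}. f (v a) = i})"
    using card_image[OF inj] by simp
  then show ?thesis unfolding img .
qed

lemma same_content_perm:
  assumes v: "v permutes {1..n}" and sc: "same_content n w X"
  shows "same_content n (\<lambda>a. w (v a)) X"
  using sc content_perm[OF v, of w] unfolding same_content_def by simp

lemma same_content_blk_perm: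
  assumes v: "v permutes {1..n}"
  shows "same_content n (\<lambda>a. blk X (v a)) X"
  using content_perm[OF v, of "blk X"] unfolding same_content_def by simp

definition rv :: "nat \<Rightarrow> nat \<Rightarrow> nat" where
  "rv n a = (if a \<in> {1..n} then n + 1 - a else a)"

lemma rv_rv: "rv n (rv n a) = a"
  unfolding rv_def by auto

lemma rv_permutes: "rv n permutes {1..n}"
proof (rule bij_imp_permutes)
  show "bij_betw (rv n) {1..n} {1..n}"
  proof (rule bij_betwI[where g="rv n"])
    show "rv n \<in> {1..n} \<rightarrow> {1..n}" unfolding rv_def by auto
    show "rv n \<in> {1..n} \<rightarrow> {1..n}" unfolding rv_def by auto
  qed (auto simp: rv_rv)
next
  fix x assume "x \<notin> {1..n}" then show "rv n x = x" by (simp add: rv_def del: atLeastAtMost_iff)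
qed

lemma perm_not_des:
  assumes u: "u permutes {1..n}" and p: "p \<in> {1..n-1}" and nd: "p \<notin> Des n u"
  shows "u p < u (Suc p)"
proof -
  have "u p \<noteq> u (Suc p)" using permutes_inj[OF u] by (metis inj_eq n_not_Suc_n)
  moreover have "\<not> u (Suc p) < u p" using nd p unfolding Des_def by simp
  ultimately show ?thesis by simp
qed

lemma blk_chain:
  assumes u: "u permutes {1..n}" and D: "Des n u \<subseteq> X"
  shows "p < q \<Longrightarrow> q \<le> n \<Longrightarrow> 1 \<le> p \<Longrightarrow> blk X p = blk X q \<Longrightarrow> u p < u q"
proof (induction q)
  case 0 then show ?case by simp
next
  case (Suc q)
  have step: "u r < u (Suc r)" if "1 \<le> r" "Suc r \<le> n" "blk X r = blk X (Suc r)" for r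
  proof -
    have "r \<notin> X" using that(3) blk_Suc[of X r] by (auto split: if_splits)
    then have "r \<notin> Des n u" using D by blast
    moreover have "r \<in> {1..n-1}" using that by auto
    ultimately show ?thesis using perm_not_des[OF u] by blast
  qed
  show ?case
  proof (cases "p = q")
    case True then show ?thesis using Suc.prems step by simp
  next
    case False
    then have pq: "p < q" using Suc.prems by simp
    have "blk X p \<le> blk X q" "blk X q \<le> blk X (Suc q)" using pq by (auto intro: blk_mono)
    then have e1: "blk X p = blk X q" "blk X q = blk X (Suc q)" using Suc.prems by simp_all
    have "u p < u q" using Suc.IH[OF pq _ _ e1(1)] Suc.prems by simp
    moreover have "u q < u (Suc q)" using step[of q] e1(2) Suc.prems pq by simp
    ultimately show ?thesis by simp
  qed
qed

lemma des_order:
  assumes u: "u permutes {1..n}" and D: "Des n u \<subseteq> X"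
    and a: "a \<in> {1..n}" and b: "b \<in> {1..n}"
  shows "inv u a < inv u b \<longleftrightarrow> lexless (\<lambda>c. blk X (inv u c)) a b"
proof -
  have iu: "inv u permutes {1..n}" using permutes_inv[OF u] .
  have ia: "inv u a \<in> {1..n}" and ib: "inv u b \<in> {1..n}"
    using permutes_in_image[OF iu] a b by auto
  have ua: "u (inv u a) = a" and ub: "u (inv u b) = b" using permutes_inverses(1)[OF u] by auto
  have fwd: "lexless (\<lambda>c. blk X (inv u c)) x y" if xy: "x \<in> {1..n}" "y \<in> {1..n}" "inv u x < inv u y" for x y
  proof -
    have ix: "inv u x \<in> {1..n}" and iy: "inv u y \<in> {1..n}"
      using permutes_in_image[OF iu] xy by auto
    have le: "blk X (inv u x) \<le> blk X (inv u y)" using xy(3) by (intro blk_mono) simp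
    show ?thesis
    proof (cases "blk X (inv u x) = blk X (inv u y)")
      case True
      have "u (inv u x) < u (inv u y)" using blk_chain[OF u D xy(3) _ _ True] ix iy by simp
      then have "x < y" using permutes_inverses(1)[OF u] by simp
      then show ?thesis using True unfolding lexless_def by simp
    next
      case False then show ?thesis using le unfolding lexless_def by simp
    qed
  qed
  show ?thesis
  proof
    assume "inv u a < inv u b" then show "lexless (\<lambda>c. blk X (inv u c)) a b" using fwd a b by blast
  next
    assume lx: "lexless (\<lambda>c. blk X (inv u c)) a b"
    show "inv u a < inv u b"
    proof (rule ccontr)
      assume "\<not> inv u a < inv u b"
      moreover have "inv u a \<noteq> inv u b"
      proof
        assume "inv u a = inv u b"
        then have "a = b" using ua ub by metis
        then show False using lx lexless_irrefl by metis
      qed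
      ultimately have "inv u b < inv u a" by simp
      then have "lexless (\<lambda>c. blk X (inv u c)) b a" using fwd a b by blast
      then show False using lx lexless_trans lexless_irrefl by metis
    qed
  qed
qed

lemma inv_eq_std:
  assumes u: "u permutes {1..n}" and D: "Des n u \<subseteq> X"
  shows "inv u = std n (\<lambda>c. blk X (inv u c))"
  by (rule std_unique[OF permutes_inv[OF u]]) (rule des_order[OF u D])

definition sig :: "nat \<Rightarrow> nat set \<Rightarrow> nat \<Rightarrow> nat" where
  "sig n Y = std n (\<lambda>a. blk Y (rv n a))"

lemma sig_permutes: "sig n Y permutes {1..n}"
  unfolding sig_def by (rule std_permutes)

lemma sig_step:
  assumes a: "a \<in> {1..n-1}" and nt: "a \<notin> tildeS n Y"
  shows "sig n Y (Suc a) = Suc (sig n Y a) \<and> sig n Y a \<in> {1..n-1} \<and> sig n Y a \<notin> Y"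
proof -
  define h where "h = (\<lambda>a. blk Y (rv n a))"
  have aN: "a \<in> {1..n}" and saN: "Suc a \<in> {1..n}" using a by auto
  have nY: "n - a \<notin> Y" using a nt unfolding tildeS_def by auto
  have "rv n a = Suc (n - a)" "rv n (Suc a) = n - a" using a unfolding rv_def by auto
  then have hh: "h (Suc a) = h a" unfolding h_def using blk_Suc[of Y "n - a"] nY by simp
  have "{b\<in>{1..n}. lexless h b (Suc a)} = insert a {b\<in>{1..n}. lexless h b a}"
    using aN hh unfolding lexless_def by auto
  moreover have "a \<notin> {b\<in>{1..n}. lexless h b a}" using lexless_irrefl by simp
  ultimately have "card {b\<in>{1..n}. lexless h b (Suc a)} = Suc (card {b\<in>{1..n}. lexless h b a})"
    by simp
  then have ss: "sig n Y (Suc a) = Suc (sig n Y a)"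
    unfolding sig_def h_def[symmetric] std_def using aN saN by simp
  have sc: "same_content n h Y" unfolding h_def by (rule same_content_blk_perm[OF rv_permutes])
  have b1: "blk Y (sig n Y a) = h a" unfolding sig_def h_def[symmetric] by (rule std_blk[OF sc aN])
  have b2: "blk Y (sig n Y (Suc a)) = h (Suc a)" unfolding sig_def h_def[symmetric] by (rule std_blk[OF sc saN])
  have "sig n Y a \<notin> Y" using b1 b2 hh ss blk_Suc[of Y "sig n Y a"] by (auto split: if_splits)
  moreover have "sig n Y a \<in> {1..n}" "sig n Y (Suc a) \<in> {1..n}"
    using std_range aN saN unfolding sig_def by auto
  ultimately show ?thesis using ss by auto
qed

definition BB :: "nat \<Rightarrow> nat set \<Rightarrow> nat set \<Rightarrow> (nat \<Rightarrow> nat) set" where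
  "BB n X Y = {u \<in> perms n. Des n u \<subseteq> X \<and> setc n Y \<subseteq> Des n (inv u)}"

definition Psi :: "nat \<Rightarrow> nat set \<Rightarrow> nat set \<Rightarrow> (nat \<Rightarrow> nat) \<Rightarrow> (nat \<Rightarrow> nat)" where
  "Psi n X Y u = inv (std n (\<lambda>a. blk X (inv u (sig n Y a))))"

lemma Psi_mem:
  assumes uB: "u \<in> BB n X Y"
  shows "Psi n X Y u \<in> BB n X (tildeS n Y)"
proof -
  have u: "u permutes {1..n}" and D: "Des n u \<subseteq> X" and A: "setc n Y \<subseteq> Des n (inv u)"
    using uB unfolding BB_def perms_def by auto
  define w where "w = (\<lambda>c. blk X (inv u c))"
  define w' where "w' = (\<lambda>a. w (sig n Y a))"
  define s where "s = std n w'"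
  have s: "s permutes {1..n}" unfolding s_def by (rule std_permutes)
  have P: "Psi n X Y u = inv s" unfolding Psi_def s_def w'_def w_def ..
  have u': "inv s permutes {1..n}" using permutes_inv[OF s] .
  have iis: "inv (inv s) = s" using permutes_inv_inv[OF s] .
  have scw: "same_content n w X" unfolding w_def by (rule same_content_blk_perm[OF permutes_inv[OF u]])
  have scw': "same_content n w' X" unfolding w'_def by (rule same_content_perm[OF sig_permutes scw])
  have D': "Des n (inv s) \<subseteq> X"
  proof
    fix p assume pD: "p \<in> Des n (inv s)"
    then have p: "p \<in> {1..n-1}" and lt: "inv s (Suc p) < inv s p" unfolding Des_def by auto
    show "p \<in> X"
    proof (rule ccontr)
      assume pX: "p \<notin> X"
      define a where "a = inv s p"
      define b where "b = inv s (Suc p)"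
      have pN: "p \<in> {1..n}" "Suc p \<in> {1..n}" using p by auto
      have aN: "a \<in> {1..n}" and bN: "b \<in> {1..n}" using permutes_in_image[OF u'] pN unfolding a_def b_def by auto
      have sa: "s a = p" and sb: "s b = Suc p" using permutes_inverses(1)[OF s] unfolding a_def b_def by auto
      have "blk X (Suc p) = blk X p" using blk_Suc[of X p] pX by simp
      then have "w' a = w' b" using std_blk[OF scw' aN] std_blk[OF scw' bN] sa sb unfolding s_def by simp
      moreover have "lexless w' a b" using std_less_iff[OF aN bN, of w'] sa sb unfolding s_def by simp
      ultimately have "a < b" unfolding lexless_def by simp
      then show False using lt unfolding a_def b_def by simp
    qed
  qed
  have A': "setc n (tildeS n Y) \<subseteq> Des n (inv (inv s))"
  proof
    fix a assume "a \<in> setc n (tildeS n Y)"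
    then have a: "a \<in> {1..n-1}" and nt: "a \<notin> tildeS n Y" unfolding setc_def by auto
    define c where "c = sig n Y a"
    have sg: "sig n Y (Suc a) = Suc c" "c \<in> {1..n-1}" "c \<notin> Y" using sig_step[OF a nt] unfolding c_def by auto
    then have "c \<in> Des n (inv u)" using A unfolding setc_def by auto
    then have "inv u (Suc c) < inv u c" unfolding Des_def by simp
    then have "lexless w (Suc c) c" unfolding w_def using des_order[OF u D, of "Suc c" c] sg(2) by auto
    then have "w (Suc c) < w c" unfolding lexless_def by simp
    then have "w' (Suc a) < w' a" unfolding w'_def using sg(1) c_def by simp
    then have "lexless w' (Suc a) a" unfolding lexless_def by simp
    then have "s (Suc a) < s a" using std_less_iff[of "Suc a" n a w'] a unfolding s_def by auto
    then show "a \<in> Des n (inv (inv s))" using a iis unfolding Des_def by simp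
  qed
  show ?thesis unfolding P BB_def perms_def using u' D' A' by simp
qed

lemma Psi_inj: "inj_on (Psi n X Y) (BB n X Y)"
proof (rule inj_onI)
  fix u1 u2 assume u1B: "u1 \<in> BB n X Y" and u2B: "u2 \<in> BB n X Y" and eq: "Psi n X Y u1 = Psi n X Y u2"
  have u1: "u1 permutes {1..n}" and D1: "Des n u1 \<subseteq> X" using u1B unfolding BB_def perms_def by auto
  have u2: "u2 permutes {1..n}" and D2: "Des n u2 \<subseteq> X" using u2B unfolding BB_def perms_def by auto
  define w1 where "w1 = (\<lambda>c. blk X (inv u1 c))"
  define w2 where "w2 = (\<lambda>c. blk X (inv u2 c))"
  define s1 where "s1 = std n (\<lambda>a. w1 (sig n Y a))"
  define s2 where "s2 = std n (\<lambda>a. w2 (sig n Y a))"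
  have s1p: "s1 permutes {1..n}" and s2p: "s2 permutes {1..n}" unfolding s1_def s2_def by (rule std_permutes)+
  have "inv s1 = inv s2" using eq unfolding Psi_def s1_def s2_def w1_def w2_def .
  then have ss: "s1 = s2" using permutes_inv_inv[OF s1p] permutes_inv_inv[OF s2p] by metis
  have sc1: "same_content n (\<lambda>a. w1 (sig n Y a)) X"
    unfolding w1_def by (rule same_content_perm[OF sig_permutes same_content_blk_perm[OF permutes_inv[OF u1]]])
  have sc2: "same_content n (\<lambda>a. w2 (sig n Y a)) X"
    unfolding w2_def by (rule same_content_perm[OF sig_permutes same_content_blk_perm[OF permutes_inv[OF u2]]])
  have ws: "w1 (sig n Y a) = w2 (sig n Y a)" if "a \<in> {1..n}" for a
    using std_blk[OF sc1 that] std_blk[OF sc2 that] ss unfolding s1_def s2_def by simp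
  have ww: "w1 c = w2 c" if c: "c \<in> {1..n}" for c
  proof -
    have ic: "inv (sig n Y) c \<in> {1..n}" using permutes_in_image[OF permutes_inv[OF sig_permutes]] c by simp
    have "sig n Y (inv (sig n Y) c) = c" using permutes_inverses(1)[OF sig_permutes] by simp
    then show ?thesis using ws[OF ic] by simp
  qed
  have "inv u1 = std n w1" unfolding w1_def by (rule inv_eq_std[OF u1 D1])
  also have "\<dots> = std n w2" by (rule std_cong) (rule ww)
  also have "\<dots> = inv u2" unfolding w2_def by (rule inv_eq_std[OF u2 D2, symmetric])
  finally show "u1 = u2" using permutes_inv_inv[OF u1] permutes_inv_inv[OF u2] by metis
qed

lemma BB_finite: "finite (BB n X Y)"
proof -
  have "BB n X Y \<subseteq> {p. p permutes {1..n}}" unfolding BB_def perms_def by auto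
  moreover have "finite {p. p permutes {1..n::nat}}" by (rule finite_permutations) simp
  ultimately show ?thesis using finite_subset by blast
qed

lemma BB_le: "card (BB n X Y) \<le> card (BB n X (tildeS n Y))"
proof (rule card_inj_on_le[OF Psi_inj])
  show "Psi n X Y ` BB n X Y \<subseteq> BB n X (tildeS n Y)" using Psi_mem by blast
  show "finite (BB n X (tildeS n Y))" by (rule BB_finite)
qed

lemma tilde_tilde: "Y \<subseteq> {1..n-1} \<Longrightarrow> tildeS n (tildeS n Y) = Y"
  unfolding tildeS_def by force

lemma BB_eq: "Y \<subseteq> {1..n-1} \<Longrightarrow> card (BB n X Y) = card (BB n X (tildeS n Y))"
  using BB_le[of n X Y] BB_le[of n X "tildeS n Y"] tilde_tilde[of Y n] by simp

lemma rv_comp: "rv n \<circ> rv n = id"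
  by (rule ext) (simp add: rv_rv)

lemma inv_rv: "inv (rv n) = rv n"
  using inv_unique_comp[OF rv_comp rv_comp] .

lemma rv_less: "x \<in> {1..n} \<Longrightarrow> y \<in> {1..n} \<Longrightarrow> rv n x < rv n y \<longleftrightarrow> y < x"
  unfolding rv_def by auto

lemma inv_comp_perm:
  assumes "f permutes {1..n}" "g permutes {1..n}"
  shows "inv (f \<circ> g) = inv g \<circ> inv f"
  using o_inv_distrib[OF permutes_bij[OF assms(1)] permutes_bij[OF assms(2)]] .

lemma BB_T1: "card (BB n J (tildeS n R)) \<le> card (BB n R J)"
proof (rule card_inj_on_le[where f="\<lambda>u. inv u \<circ> rv n"])
  show "finite (BB n R J)" by (rule BB_finite)
  show "inj_on (\<lambda>u. inv u \<circ> rv n) (BB n J (tildeS n R))"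
  proof (rule inj_onI)
    fix u1 u2 assume u1: "u1 \<in> BB n J (tildeS n R)" and u2: "u2 \<in> BB n J (tildeS n R)"
      and eq: "inv u1 \<circ> rv n = inv u2 \<circ> rv n"
    have p1: "u1 permutes {1..n}" and p2: "u2 permutes {1..n}" using u1 u2 unfolding BB_def perms_def by auto
    have "inv u1 \<circ> rv n \<circ> rv n = inv u2 \<circ> rv n \<circ> rv n" using eq by simp
    then have "inv u1 = inv u2" by (simp add: comp_assoc rv_comp)
    then have "inv (inv u1) = inv (inv u2)" by simp
    then show "u1 = u2" unfolding permutes_inv_inv[OF p1] permutes_inv_inv[OF p2] .
  qed
  show "(\<lambda>u. inv u \<circ> rv n) ` BB n J (tildeS n R) \<subseteq> BB n R J"
  proof
    fix v assume "v \<in> (\<lambda>u. inv u \<circ> rv n) ` BB n J (tildeS n R)"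
    then obtain u where uB: "u \<in> BB n J (tildeS n R)" and v: "v = inv u \<circ> rv n" by blast
    have u: "u permutes {1..n}" and D: "Des n u \<subseteq> J" and A: "setc n (tildeS n R) \<subseteq> Des n (inv u)"
      using uB unfolding BB_def perms_def by auto
    have iu: "inv u permutes {1..n}" using permutes_inv[OF u] .
    have vp: "v permutes {1..n}" unfolding v by (rule permutes_compose[OF rv_permutes iu])
    have iv: "inv v = rv n \<circ> u"
      unfolding v inv_comp_perm[OF iu rv_permutes] inv_rv permutes_inv_inv[OF u] ..
    have Dv: "Des n v \<subseteq> R"
    proof
      fix p assume "p \<in> Des n v"
      then have p: "p \<in> {1..n-1}" and lt: "v (Suc p) < v p" unfolding Des_def by auto
      define q where "q = n - p"
      have q: "q \<in> {1..n-1}" using p unfolding q_def by auto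
      have "rv n (Suc p) = q" "rv n p = Suc q" using p unfolding rv_def q_def by auto
      then have "inv u q < inv u (Suc q)" using lt unfolding v by simp
      then have "q \<notin> Des n (inv u)" unfolding Des_def by simp
      then have "q \<in> tildeS n R" using A q unfolding setc_def by auto
      then show "p \<in> R" unfolding tildeS_def q_def using p by auto
    qed
    have Av: "setc n J \<subseteq> Des n (inv v)"
    proof
      fix p assume "p \<in> setc n J"
      then have p: "p \<in> {1..n-1}" and pJ: "p \<notin> J" unfolding setc_def by auto
      have pn: "p \<in> {1..n}" "Suc p \<in> {1..n}" using p by auto
      have "p \<notin> Des n u" using pJ D by blast
      then have "u p < u (Suc p)" using perm_not_des[OF u p] by simp
      moreover have "u p \<in> {1..n}" "u (Suc p) \<in> {1..n}" using permutes_in_image[OF u] pn by simp_all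
      ultimately have "rv n (u (Suc p)) < rv n (u p)" using rv_less[of "u (Suc p)" n "u p"] by simp
      then show "p \<in> Des n (inv v)" unfolding iv Des_def using p by simp
    qed
    show "v \<in> BB n R J" unfolding BB_def perms_def using vp Dv Av by simp
  qed
qed

lemma BB_T2: "card (BB n R J) \<le> card (BB n J (tildeS n R))"
proof (rule card_inj_on_le[where f="\<lambda>v. rv n \<circ> inv v"])
  show "finite (BB n J (tildeS n R))" by (rule BB_finite)
  show "inj_on (\<lambda>v. rv n \<circ> inv v) (BB n R J)"
  proof (rule inj_onI)
    fix v1 v2 assume v1: "v1 \<in> BB n R J" and v2: "v2 \<in> BB n R J"
      and eq: "rv n \<circ> inv v1 = rv n \<circ> inv v2"
    have p1: "v1 permutes {1..n}" and p2: "v2 permutes {1..n}" using v1 v2 unfolding BB_def perms_def by auto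
    have "rv n \<circ> (rv n \<circ> inv v1) = rv n \<circ> (rv n \<circ> inv v2)" using eq by simp
    then have "inv v1 = inv v2" by (simp add: comp_assoc[symmetric] rv_comp)
    then have "inv (inv v1) = inv (inv v2)" by simp
    then show "v1 = v2" unfolding permutes_inv_inv[OF p1] permutes_inv_inv[OF p2] .
  qed
  show "(\<lambda>v. rv n \<circ> inv v) ` BB n R J \<subseteq> BB n J (tildeS n R)"
  proof
    fix u assume "u \<in> (\<lambda>v. rv n \<circ> inv v) ` BB n R J"
    then obtain v where vB: "v \<in> BB n R J" and u: "u = rv n \<circ> inv v" by blast
    have v: "v permutes {1..n}" and D: "Des n v \<subseteq> R" and A: "setc n J \<subseteq> Des n (inv v)"
      using vB unfolding BB_def perms_def by auto
    have iv: "inv v permutes {1..n}" using permutes_inv[OF v] .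
    have up: "u permutes {1..n}" unfolding u by (rule permutes_compose[OF iv rv_permutes])
    have iu: "inv u = v \<circ> rv n"
      unfolding u inv_comp_perm[OF rv_permutes iv] inv_rv permutes_inv_inv[OF v] ..
    have Du: "Des n u \<subseteq> J"
    proof
      fix p assume "p \<in> Des n u"
      then have p: "p \<in> {1..n-1}" and lt: "u (Suc p) < u p" unfolding Des_def by auto
      have "p \<in> {1..n}" "Suc p \<in> {1..n}" using p by auto
      then have "inv v p \<in> {1..n}" "inv v (Suc p) \<in> {1..n}" using permutes_in_image[OF iv] by simp_all
      then have "inv v p < inv v (Suc p)" using lt rv_less[of "inv v (Suc p)" n "inv v p"] unfolding u by simp
      then have "p \<notin> Des n (inv v)" unfolding Des_def by simp
      then show "p \<in> J" using A p unfolding setc_def by auto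
    qed
    have Au: "setc n (tildeS n R) \<subseteq> Des n (inv u)"
    proof
      fix q assume "q \<in> setc n (tildeS n R)"
      then have q: "q \<in> {1..n-1}" and qt: "q \<notin> tildeS n R" unfolding setc_def by auto
      define p where "p = n - q"
      have p: "p \<in> {1..n-1}" using q unfolding p_def by auto
      have "p \<notin> R" using qt q unfolding tildeS_def p_def by auto
      then have "p \<notin> Des n v" using D by blast
      then have "v p < v (Suc p)" using perm_not_des[OF v p] by simp
      moreover have "rv n (Suc q) = p" "rv n q = Suc p" using q unfolding rv_def p_def by auto
      ultimately show "q \<in> Des n (inv u)" unfolding iu Des_def using q by simp
    qed
    show "u \<in> BB n J (tildeS n R)" unfolding BB_def perms_def using up Du Au by simp
  qed
qed

lemma cnt_BB: "cnt n X (setc n Y) = card (BB n X Y)"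
  unfolding cnt_def BB_def ..

theorem cnt_symmetry:
  assumes "J \<subseteq> {1..n-1}" "R \<subseteq> {1..n-1}"
  shows "cnt n J (setc n (tildeS n R)) = cnt n R (setc n (tildeS n J))"
proof -
  have "cnt n J (setc n (tildeS n R)) = card (BB n J (tildeS n R))" by (rule cnt_BB)
  also have "\<dots> = card (BB n R J)" using BB_T1 BB_T2 by (rule antisym)
  also have "\<dots> = card (BB n R (tildeS n J))" by (rule BB_eq[OF assms(1)])
  also have "\<dots> = cnt n R (setc n (tildeS n J))" by (rule cnt_BB[symmetric])
  finally show ?thesis .
qed

lemma alt_pow:
  assumes "finite T"
  shows "(\<Sum>L\<in>Pow T. (-1::int)^card L) = (if T = {} then 1 else 0)"
  using assms
proof (induction T rule: finite_induct)
  case empty then show ?case by simp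
next
  case (insert x F)
  have disj: "Pow F \<inter> insert x ` Pow F = {}" using insert.hyps by auto
  have inj: "inj_on (insert x) (Pow F)" using insert.hyps by (auto intro!: inj_onI)
  have "(\<Sum>L\<in>insert x ` Pow F. (-1::int)^card L) = (\<Sum>L\<in>Pow F. (-1::int)^card (insert x L))"
    using sum.reindex[OF inj, of "\<lambda>L. (-1::int)^card L"] by (simp add: comp_def)
  also have "\<dots> = (\<Sum>L\<in>Pow F. - ((-1::int)^card L))"
  proof (rule sum.cong)
    fix L assume "L \<in> Pow F"
    then have "finite L" "x \<notin> L" using insert.hyps finite_subset by auto
    then show "(-1::int)^card (insert x L) = - ((-1)^card L)" by simp
  qed simp
  finally have "(\<Sum>L\<in>Pow (insert x F). (-1::int)^card L) = (\<Sum>L\<in>Pow F. (-1::int)^card L) + (\<Sum>L\<in>Pow F. - ((-1::int)^card L))"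
    unfolding Pow_insert using disj insert.hyps by (subst sum.union_disjoint) auto
  then show ?case by (simp add: sum_negf)
qed

lemma IE:
  assumes S: "finite S" and A: "A \<subseteq> S"
  shows "(\<Sum>K\<in>{K\<in>Pow S. A \<subseteq> K}. (-1::int)^card K) = (if A = S then (-1)^card S else 0)"
proof -
  have fA: "finite A" using S A finite_subset by blast
  have bij: "bij_betw (\<lambda>L. A \<union> L) (Pow (S - A)) {K\<in>Pow S. A \<subseteq> K}"
  proof (rule bij_betwI[where g="\<lambda>K. K - A"])
    show "(\<lambda>L. A \<union> L) \<in> Pow (S - A) \<rightarrow> {K\<in>Pow S. A \<subseteq> K}" using A by auto
    show "(\<lambda>K. K - A) \<in> {K\<in>Pow S. A \<subseteq> K} \<rightarrow> Pow (S - A)" by auto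
  qed auto
  have "(\<Sum>K\<in>{K\<in>Pow S. A \<subseteq> K}. (-1::int)^card K) = (\<Sum>L\<in>Pow (S - A). (-1::int)^card (A \<union> L))"
    using sum.reindex_bij_betw[OF bij, of "\<lambda>K. (-1::int)^card K"] by simp
  also have "\<dots> = (\<Sum>L\<in>Pow (S - A). (-1::int)^card A * (-1)^card L)"
  proof (rule sum.cong)
    fix L assume "L \<in> Pow (S - A)"
    then have "finite L" "A \<inter> L = {}" using S finite_subset by auto
    then show "(-1::int)^card (A \<union> L) = (-1)^card A * (-1)^card L"
      using fA by (simp add: card_Un_disjoint power_add)
  qed simp
  also have "\<dots> = (-1)^card A * (if S - A = {} then 1 else 0)"
    using alt_pow[of "S - A"] S by (simp add: sum_distrib_left[symmetric])
  also have "\<dots> = (if A = S then (-1)^card S else 0)" using A by auto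
  finally show ?thesis .
qed

lemma tilde_sub:
  assumes "K \<subseteq> {1..n-1}" "T \<subseteq> {1..n-1}"
  shows "T \<subseteq> tildeS n K \<longleftrightarrow> tildeS n T \<subseteq> K"
proof
  assume a: "T \<subseteq> tildeS n K"
  show "tildeS n T \<subseteq> K"
  proof
    fix i assume "i \<in> tildeS n T"
    then have "i \<in> {1..n-1}" "n - i \<in> T" unfolding tildeS_def by auto
    then have "n - (n - i) \<in> K" using a unfolding tildeS_def by auto
    then show "i \<in> K" using \<open>i \<in> {1..n-1}\<close> by auto
  qed
next
  assume a: "tildeS n T \<subseteq> K"
  show "T \<subseteq> tildeS n K"
  proof
    fix r assume r: "r \<in> T"
    then have rr: "r \<in> {1..n-1}" using assms by auto
    then have "n - r \<in> tildeS n T" unfolding tildeS_def using r by auto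
    then have "n - r \<in> K" using a by auto
    then show "r \<in> tildeS n K" unfolding tildeS_def using rr by auto
  qed
qed

lemma main_inner:
  assumes n: "1 \<le> n" and D: "D \<subseteq> {1..n-1}" and T: "T \<subseteq> {1..n-1}"
  shows "(\<Sum>K\<in>Pow {1..n-1}. Fcoef D K * ((-1)^(card K + 1) * (if T \<subseteq> tildeS n K then 1 else 0)))
       = (-1)^n * (if setc n (tildeS n T) \<subseteq> D then 1 else 0)"
proof -
  define S where "S = {1..n-1}"
  define A where "A = D \<union> tildeS n T"
  have AS: "A \<subseteq> S" unfolding A_def S_def using D unfolding tildeS_def by auto
  have "(\<Sum>K\<in>Pow {1..n-1}. Fcoef D K * ((-1)^(card K + 1) * (if T \<subseteq> tildeS n K then 1 else 0)))
      = (\<Sum>K\<in>Pow S. if A \<subseteq> K then - ((-1::int)^card K) else 0)"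
  proof (rule sum.cong)
    fix K assume "K \<in> Pow S"
    then have K: "K \<subseteq> {1..n-1}" by (simp add: S_def)
    show "Fcoef D K * ((-1)^(card K + 1) * (if T \<subseteq> tildeS n K then 1 else 0)) = (if A \<subseteq> K then - ((-1::int)^card K) else 0)"
      unfolding Fcoef_def A_def using tilde_sub[OF K T] by auto
  qed (simp add: S_def)
  also have "\<dots> = - (\<Sum>K\<in>{K\<in>Pow S. A \<subseteq> K}. (-1::int)^card K)"
    by (simp add: sum.inter_filter[symmetric] sum_negf S_def)
  also have "\<dots> = - (if A = S then (-1)^card S else 0)"
    unfolding S_def by (subst IE) (use AS S_def in auto)
  also have "\<dots> = (-1)^n * (if setc n (tildeS n T) \<subseteq> D then 1 else 0)"
  proof -
    have cS: "card S = n - 1" unfolding S_def by simp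
    have "(-1::int)^n = - ((-1)^(n-1))" using n by (cases n) auto
    moreover have "A = S \<longleftrightarrow> setc n (tildeS n T) \<subseteq> D"
      using AS unfolding A_def S_def setc_def by auto
    ultimately show ?thesis using cS by auto
  qed
  finally show ?thesis .
qed

lemma perms_inv: "v \<in> perms n \<Longrightarrow> inv v \<in> perms n"
  unfolding perms_def by (simp add: permutes_inv)

lemma perms_inv_inv: "v \<in> perms n \<Longrightarrow> inv (inv v) = v"
  unfolding perms_def by (simp add: permutes_inv_inv)

lemma finite_perms: "finite (perms n)"
  unfolding perms_def by (rule finite_permutations) simp

lemma Theta_perm:
  assumes v: "v \<in> perms n"
  shows "Theta n z v = z (inv v)"
proof -
  have "Theta n z v = (\<Sum>u\<in>perms n. if u = inv v then z u else 0)"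
    unfolding Theta_def
  proof (rule sum.cong)
    fix u assume u: "u \<in> perms n"
    have "inv u = v \<longleftrightarrow> u = inv v"
      using perms_inv_inv[OF u] perms_inv_inv[OF v] by metis
    then show "(if inv u = v then z u else 0) = (if u = inv v then z u else 0)" by simp
  qed simp
  also have "\<dots> = z (inv v)" using perms_inv[OF v] finite_perms by (simp add: sum.delta')
  finally show ?thesis .
qed

lemma Phi_formula:
  "Phi n g R = (\<Sum>v\<in>perms n. (\<Sum>K\<in>Pow {1..n-1}. g K * Fcoef (Des n (inv v)) K) * Fcoef (Des n v) R)"
  unfolding Phi_def Dmap_def comp_apply
  by (rule sum.cong) (simp_all add: Theta_perm Dstar_def)

lemma Mstar_sum:
  assumes "J \<in> A" "finite A"
  shows "(\<Sum>K\<in>A. Mstar J K * f K) = (f J :: int)"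
proof -
  have "(\<Sum>K\<in>A. Mstar J K * f K) = (\<Sum>K\<in>A. if K = J then f K else 0)"
    by (rule sum.cong) (auto simp: Mstar_def)
  then show ?thesis using assms by simp
qed

lemma Des_sub: "Des n u \<subseteq> {1..n-1}"
  unfolding Des_def by auto

lemma sum_indicator_card:
  assumes "finite A"
  shows "(\<Sum>x\<in>A. if P x then 1 else 0) = int (card {x\<in>A. P x})"
  using assms by (simp add: sum.inter_filter[symmetric])

theorem conj2:
  assumes n: "1 \<le> n" and J: "J \<subseteq> {1..n-1}" and R: "R \<subseteq> {1..n-1}"
  shows "Sq n (Phi n (Mstar J)) R = (-1) ^ n * int (cnt n J (setc n (tildeS n R)))"
proof -
  define P where "P = perms n"
  define Q where "Q = Pow {1..n-1::nat}"
  have fP: "finite P" unfolding P_def by (rule finite_perms)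
  have fQ: "finite Q" unfolding Q_def by simp
  have JQ: "J \<in> Q" unfolding Q_def using J by simp
  have PhiM: "Phi n (Mstar J) K = (\<Sum>v\<in>P. Fcoef (Des n (inv v)) J * Fcoef (Des n v) K)" for K
    unfolding Phi_formula P_def using Mstar_sum[OF JQ fQ, of "\<lambda>K. Fcoef (Des n (inv _)) K"]
    by (simp add: Q_def)
  have a: "qcoeff (antipode (comp n K)) (comp n R) = (-1)^(card K + 1) * (if R \<subseteq> tildeS n K then 1 else 0)"
    if "K \<in> Q" for K using antipode_sets[OF _ R n, of K] that unfolding Q_def by simp
  define c where "c K = (-1::int)^(card K + 1) * (if R \<subseteq> tildeS n K then 1 else 0)" for K
  have "Sq n (Phi n (Mstar J)) R = (\<Sum>K\<in>Q. (\<Sum>v\<in>P. Fcoef (Des n (inv v)) J * Fcoef (Des n v) K) * c K)"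
    unfolding Sq_def Q_def[symmetric] PhiM using a unfolding c_def by (intro sum.cong) auto
  also have "\<dots> = (\<Sum>K\<in>Q. \<Sum>v\<in>P. Fcoef (Des n (inv v)) J * (Fcoef (Des n v) K * c K))"
    by (simp only: sum_distrib_right mult.assoc)
  also have "\<dots> = (\<Sum>v\<in>P. \<Sum>K\<in>Q. Fcoef (Des n (inv v)) J * (Fcoef (Des n v) K * c K))"
    by (rule sum.swap)
  also have "\<dots> = (\<Sum>v\<in>P. Fcoef (Des n (inv v)) J * (\<Sum>K\<in>Q. Fcoef (Des n v) K * c K))"
    by (simp only: sum_distrib_left)
  also have "\<dots> = (\<Sum>v\<in>P. Fcoef (Des n (inv v)) J * ((-1)^n * (if setc n (tildeS n R) \<subseteq> Des n v then 1 else 0)))"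
    unfolding Q_def c_def using main_inner[OF n Des_sub R] by simp
  also have "\<dots> = (-1)^n * (\<Sum>v\<in>P. if Des n (inv v) \<subseteq> J \<and> setc n (tildeS n R) \<subseteq> Des n v then 1 else 0)"
    unfolding sum_distrib_left by (intro sum.cong) (auto simp: Fcoef_def)
  also have "(\<Sum>v\<in>P. if Des n (inv v) \<subseteq> J \<and> setc n (tildeS n R) \<subseteq> Des n v then 1 else 0)
      = (\<Sum>u\<in>P. if Des n u \<subseteq> J \<and> setc n (tildeS n R) \<subseteq> Des n (inv u) then (1::int) else 0)"
    by (rule sum.reindex_bij_witness[where i=inv and j=inv])
       (auto simp: P_def perms_inv perms_inv_inv)
  also have "\<dots> = int (cnt n J (setc n (tildeS n R)))"
    unfolding cnt_def P_def using finite_perms by (simp add: sum_indicator_card)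
  finally show ?thesis .
qed

theorem conj3:
  assumes n: "1 \<le> n" and J: "J \<subseteq> {1..n-1}" and R: "R \<subseteq> {1..n-1}"
  shows "Phi n (Sstar n (Mstar J)) R = (-1) ^ n * int (cnt n R (setc n (tildeS n J)))"
proof -
  define P where "P = perms n"
  define Q where "Q = Pow {1..n-1::nat}"
  have fQ: "finite Q" unfolding Q_def by simp
  have JQ: "J \<in> Q" unfolding Q_def using J by simp
  have SM: "Sstar n (Mstar J) K = (-1)^(card K + 1) * (if J \<subseteq> tildeS n K then 1 else 0)" if "K \<in> Q" for K
  proof -
    have "Sstar n (Mstar J) K = qcoeff (antipode (comp n K)) (comp n J)"
      unfolding Sstar_def Q_def[symmetric] by (rule Mstar_sum[OF JQ fQ])
    also have "\<dots> = (-1)^(card K + 1) * (if J \<subseteq> tildeS n K then 1 else 0)"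
      using antipode_sets[OF _ J n, of K] that unfolding Q_def by simp
    finally show ?thesis .
  qed
  have "Phi n (Sstar n (Mstar J)) R = (\<Sum>v\<in>P. (\<Sum>K\<in>Q. Fcoef (Des n (inv v)) K * ((-1)^(card K + 1) * (if J \<subseteq> tildeS n K then 1 else 0))) * Fcoef (Des n v) R)"
    unfolding Phi_formula P_def[symmetric] Q_def[symmetric]
  proof (rule sum.cong)
    fix v
    have "(\<Sum>K\<in>Q. Sstar n (Mstar J) K * Fcoef (Des n (inv v)) K) = (\<Sum>K\<in>Q. Fcoef (Des n (inv v)) K * ((-1)^(card K + 1) * (if J \<subseteq> tildeS n K then 1 else 0)))"
      by (rule sum.cong) (simp_all add: SM mult.commute)
    then show "(\<Sum>K\<in>Q. Sstar n (Mstar J) K * Fcoef (Des n (inv v)) K) * Fcoef (Des n v) R = (\<Sum>K\<in>Q. Fcoef (Des n (inv v)) K * ((-1)^(card K + 1) * (if J \<subseteq> tildeS n K then 1 else 0))) * Fcoef (Des n v) R"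
      by simp
  qed simp
  also have "\<dots> = (\<Sum>v\<in>P. ((-1)^n * (if setc n (tildeS n J) \<subseteq> Des n (inv v) then 1 else 0)) * Fcoef (Des n v) R)"
    unfolding Q_def using main_inner[OF n Des_sub J] by simp
  also have "\<dots> = (-1)^n * (\<Sum>v\<in>P. if Des n v \<subseteq> R \<and> setc n (tildeS n J) \<subseteq> Des n (inv v) then 1 else 0)"
    unfolding sum_distrib_left by (intro sum.cong) (auto simp: Fcoef_def)
  also have "(\<Sum>v\<in>P. if Des n v \<subseteq> R \<and> setc n (tildeS n J) \<subseteq> Des n (inv v) then (1::int) else 0) = int (cnt n R (setc n (tildeS n J)))"
    unfolding cnt_def P_def using finite_perms by (simp add: sum_indicator_card)
  finally show ?thesis .
qed

theorem mainTheorem19: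
  fixes n :: nat and J R :: "nat set"
  assumes "n \<ge> 1" and "J \<subseteq> {1..n-1}" and "R \<subseteq> {1..n-1}"
  shows "cnt n J (setc n (tildeS n R)) = cnt n R (setc n (tildeS n J))
       \<and> Sq n (Phi n (Mstar J)) R = (-1) ^ n * int (cnt n J (setc n (tildeS n R)))
       \<and> Phi n (Sstar n (Mstar J)) R = (-1) ^ n * int (cnt n J (setc n (tildeS n R)))"
  using cnt_symmetry[OF assms(2,3)] conj2[OF assms] conj3[OF assms] by simp

end
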